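(* Let $U:\mathbb{R}^p\times\mathbb{R}^m\to\mathbb{R}$ be $C^2$, $f_1=-\partial_xU$, $f_2=-\partial_yU$, and $g:\mathbb{R}^m\to\mathbb{R}^m$; assume $f_1,f_2,\nabla g$ are $C^1$ with bounded derivatives. For $\omega>0$ let $(x^\omega,y^\omega)$ solve $$\ddot x^\omega=f_1(x^\omega,y^\omega),\qquad \ddot y^\omega=f_2(x^\omega,y^\omega)-\omega^2 g(y^\omega)^T\nabla g(y^\omega),$$ with $\omega$-independent initial data $x^\omega(0)=x_0$, $\dot x^\omega(0)=\dot x_0$, $y^\omega(0)=y_0$, $\dot y^\omega(0)=\dot y_0$, where $g(y_0)=0$ and $\nabla g(y_0)\dot y_0=0$. Assume $x^\omega,y^\omega$ are bounded uniformly in $\omega$ and time, and that $\nabla g$ is nonsingular in a neighborhood of $y_0$. Then for every $t\ge0$ the limit $$\lambda(t):=-\lim_{T\to0}\lim_{\omega\to\infty}\frac1T\int_t^{t+T}\omega^2g(y^\omega(s))\,ds$$ exists and is finite. Moreover, letting $(x,y)$ be the solution of $\ddot x=f_1(x,y)$, $\ddot y=f_2(x,y)+\lambda^T\nabla g(y)$ with the same initial data $x_0,\dot x_0,y_0,\dot y_0$, one has, as $\omega\to\infty$: $x^\omega(t)\to x(t)$ for every $t\ge0$; $y^\omega$ two-scale flow converges to $y$; and $g(y^\omega(t))\to0$ for every $t\ge0$.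
   Context: $\nabla g(y)$ denotes the $m\times m$ Jacobian of $g$ at $y$. Two-scale flow convergence of $y^\omega$ to $y$ means: for every $t\ge0$ and every bounded, uniformly Lipschitz continuous $\varphi:\mathbb{R}^m\to\mathbb{R}$, $\lim_{T\to0}\lim_{\omega\to\infty}\frac1T\int_t^{t+T}\big(\varphi(y^\omega(s))-\varphi(y(s))\big)ds=0$. *)

theory Defs
  imports "HOL-Analysis.Analysis"
begin

definition C1_bdd_deriv :: "('a::real_normed_vector \<Rightarrow> 'b::real_normed_vector) \<Rightarrow> bool" where
  "C1_bdd_deriv F \<longleftrightarrow> (\<exists>F' :: 'a \<Rightarrow> ('a \<Rightarrow>\<^sub>L 'b).
      (\<forall>z. (F has_derivative blinfun_apply (F' z)) (at z)) \<and>
      continuous_on UNIV F' \<and> bounded (range F'))"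

definition iter_lim :: "(real \<Rightarrow> real \<Rightarrow> 'a::real_normed_vector) \<Rightarrow> 'a \<Rightarrow> bool" where
  "iter_lim A l \<longleftrightarrow> (\<exists>L. (\<forall>\<^sub>F T in at_right 0. ((\<lambda>\<omega>. A \<omega> T) \<longlongrightarrow> L T) at_top)
                         \<and> (L \<longlongrightarrow> l) (at_right 0))"

definition solves2 :: "(real \<Rightarrow> 'a::real_normed_vector) \<Rightarrow> (real \<Rightarrow> 'a) \<Rightarrow> 'a \<Rightarrow> 'a \<Rightarrow> bool" where
  "solves2 z F z0 z1 \<longleftrightarrow> (\<exists>z'. (\<forall>t\<ge>0. (z has_vector_derivative z' t) (at t within {0..}) \<and>
                                      (z' has_vector_derivative F t) (at t within {0..}))
                              \<and> z 0 = z0 \<and> z' 0 = z1)"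

definition two_scale_flow_conv :: "(real \<Rightarrow> real \<Rightarrow> 'a::real_normed_vector) \<Rightarrow> (real \<Rightarrow> 'a) \<Rightarrow> bool" where
  "two_scale_flow_conv yw y \<longleftrightarrow>
     (\<forall>t\<ge>0. \<forall>\<phi> :: 'a \<Rightarrow> real. bounded (range \<phi>) \<and> (\<exists>C. C-lipschitz_on UNIV \<phi>) \<longrightarrow>
        iter_lim (\<lambda>\<omega> T. (1 / T) * integral {t..t+T} (\<lambda>s. \<phi> (yw \<omega> s) - \<phi> (y s))) 0)"

end

theory Submission
  imports Defs
begin



lemma mat_vec_norm:
  fixes A :: "real^'n^'m"
  shows "norm (A *v x) \<le> norm A * norm x"
proof -
  have "norm (A *v x) ^ 2 = (\<Sum>i\<in>UNIV. ((A *v x) $ i)^2)"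
    unfolding power2_norm_eq_inner inner_vec_def by (simp add: power2_eq_square)
  also have "\<dots> = (\<Sum>i\<in>UNIV. (inner (A $ i) x)^2)"
    by (simp add: matrix_vector_mult_def inner_vec_def)
  also have "\<dots> \<le> (\<Sum>i\<in>UNIV. (norm (A $ i))^2 * (norm x)^2)"
  proof (rule sum_mono)
    fix i
    have "\<bar>inner (A $ i) x\<bar> \<le> norm (A $ i) * norm x" by (rule Cauchy_Schwarz_ineq2)
    then have "\<bar>inner (A $ i) x\<bar>^2 \<le> (norm (A $ i) * norm x)^2"
      by (rule power_mono) simp
    then show "(inner (A $ i) x)^2 \<le> (norm (A $ i))^2 * (norm x)^2"
      by (simp add: power_mult_distrib)
  qed
  also have "\<dots> = (norm A)^2 * (norm x)^2"
  proof -
    have "(norm A)^2 = (\<Sum>i\<in>UNIV. (norm (A $ i))^2)"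
      by (simp add: norm_vec_def L2_set_def sum_nonneg)
    then show ?thesis by (simp add: sum_distrib_right)
  qed
  finally have "norm (A *v x) ^ 2 \<le> (norm A * norm x)^2" by (simp add: power_mult_distrib)
  then show ?thesis by (rule power2_le_imp_le) simp
qed

lemma vec_mat_norm:
  fixes A :: "real^'n^'m"
  shows "norm (x v* A) \<le> norm x * norm A"
proof -
  have "norm (x v* A) ^ 2 = inner x (A *v (x v* A))"
    by (simp add: dot_lmul_matrix[symmetric] power2_norm_eq_inner)
  also have "\<dots> \<le> norm x * norm (A *v (x v* A))"
    using Cauchy_Schwarz_ineq2 abs_le_D1 by blast
  also have "\<dots> \<le> norm x * (norm A * norm (x v* A))"
    by (simp add: mat_vec_norm mult_left_mono)
  finally have le: "norm (x v* A) * norm (x v* A) \<le> (norm x * norm A) * norm (x v* A)"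
    by (simp add: power2_eq_square algebra_simps)
  then show ?thesis
  proof (cases "norm (x v* A) = 0")
    case True then show ?thesis by simp
  next
    case False then have "norm (x v* A) > 0" by simp
    then show ?thesis using le mult_le_cancel_right_pos by blast
  qed
qed




lemma C1_lip:
  assumes "C1_bdd_deriv F"
  shows "\<exists>L>0. \<forall>a b. norm (F a - F b) \<le> L * norm (a - b)"
proof -
  obtain F' where der: "\<And>z. (F has_derivative blinfun_apply (F' z)) (at z)"
    and bd: "bounded (range F')"
    using assms unfolding C1_bdd_deriv_def by blast
  obtain B where B: "\<And>z. norm (F' z) \<le> B"
    using bd unfolding bounded_iff by auto
  have "norm (F a - F b) \<le> (\<bar>B\<bar> + 1) * norm (a - b)" for a b
  proof (rule differentiable_bound[where S=UNIV and f'="\<lambda>z. blinfun_apply (F' z)"])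
    show "convex (UNIV::'a set)" by simp
    show "(F has_derivative blinfun_apply (F' x)) (at x within UNIV)" for x using der by simp
    show "onorm (blinfun_apply (F' x)) \<le> \<bar>B\<bar> + 1" for x
      using B[of x] by (simp add: norm_blinfun.rep_eq[symmetric])
  qed auto
  then show ?thesis by (intro exI[of _ "\<bar>B\<bar> + 1"]) auto
qed

lemma gronwall:
  fixes \<phi> \<phi>' :: "real \<Rightarrow> real"
  assumes T: "0 \<le> T"
    and der: "\<And>s. s \<in> {0..T} \<Longrightarrow> (\<phi> has_real_derivative \<phi>' s) (at s within {0..T})"
    and bd: "\<And>s. s \<in> {0..T} \<Longrightarrow> \<phi>' s \<le> C * \<phi> s + b"
    and C: "0 \<le> C" and b: "0 \<le> b"
  shows "\<phi> T \<le> (\<phi> 0 + b * T) * exp (C*T)"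
proof (cases "T = 0")
  case True then show ?thesis by simp
next
  case False
  then have T0: "0 < T" using T by simp
  define psi where "psi s = exp (- C * s) * \<phi> s - b * s" for s
  define psi' where "psi' s = exp (- C * s) * \<phi>' s - C * exp (- C * s) * \<phi> s - b" for s
  have dpsi: "(psi has_real_derivative psi' s) (at s within {0..T})" if "s \<in> {0..T}" for s
    unfolding psi_def psi'_def
    by (rule derivative_eq_intros der[OF that] refl | simp add: algebra_simps)+
  have neg: "psi' s \<le> 0" if "s \<in> {0..T}" for s
  proof -
    have e: "exp (- C * s) \<le> 1" using that C by auto
    have "psi' s = exp (- C * s) * (\<phi>' s - C * \<phi> s) - b" unfolding psi'_def by (simp add: algebra_simps)
    also have "\<dots> \<le> exp (- C * s) * b - b"
      using bd[OF that] by (intro diff_right_mono mult_left_mono) auto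
    also have "\<dots> \<le> 0" using e b by (simp add: mult_left_le_one_le)
    finally show ?thesis .
  qed
  have cont: "continuous_on {0..T} psi"
    using dpsi by (meson DERIV_continuous continuous_on_eq_continuous_within)
  have dif: "psi differentiable (at x)" if "0 < x" "x < T" for x
    using dpsi[of x] that at_within_Icc_at[of 0 x T] by (auto simp: real_differentiable_def)
  obtain l z where z: "0 < z" "z < T" "DERIV psi z :> l" "psi T - psi 0 = (T - 0) * l"
    using MVT[OF T0 cont dif] by blast
  have "DERIV psi z :> psi' z" using dpsi[of z] z at_within_Icc_at[of 0 z T] by auto
  then have "l = psi' z" using z(3) DERIV_unique by blast
  then have "l \<le> 0" using neg[of z] z by auto
  then have "T * l \<le> 0" using T0 by (simp add: mult_nonneg_nonpos)
  then have "psi T \<le> psi 0" using z(4) by simp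
  then have "exp (- C * T) * \<phi> T \<le> \<phi> 0 + b * T" unfolding psi_def by simp
  then have "exp (C*T) * (exp (- C * T) * \<phi> T) \<le> exp (C*T) * (\<phi> 0 + b * T)"
    by (rule mult_left_mono) simp
  then show ?thesis by (simp add: exp_minus field_simps)
qed




lemma inner_self_deriv:
  assumes "(f has_vector_derivative f') (at t within S)"
  shows "((\<lambda>s. f s \<bullet> f s) has_real_derivative 2 * (f t \<bullet> f')) (at t within S)"
proof -
  have "((\<lambda>s. f s \<bullet> f s) has_derivative (\<lambda>h. f t \<bullet> (h *\<^sub>R f') + (h *\<^sub>R f') \<bullet> f t)) (at t within S)"
    using has_derivative_inner[OF assms[unfolded has_vector_derivative_def] assms[unfolded has_vector_derivative_def]] .
  moreover have "(\<lambda>h. f t \<bullet> (h *\<^sub>R f') + (h *\<^sub>R f') \<bullet> f t) = (*) (2 * (f t \<bullet> f'))"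
    by (auto simp: inner_commute algebra_simps)
  ultimately show ?thesis by (simp add: has_field_derivative_def)
qed

lemma inner_deriv:
  assumes "(f has_vector_derivative f') (at t within S)" "(k has_vector_derivative k') (at t within S)"
  shows "((\<lambda>s. f s \<bullet> k s) has_real_derivative (f t \<bullet> k' + f' \<bullet> k t)) (at t within S)"
proof -
  have "((\<lambda>s. f s \<bullet> k s) has_derivative (\<lambda>h. f t \<bullet> (h *\<^sub>R k') + (h *\<^sub>R f') \<bullet> k t)) (at t within S)"
    using has_derivative_inner[OF assms(1)[unfolded has_vector_derivative_def] assms(2)[unfolded has_vector_derivative_def]] .
  moreover have "(\<lambda>h. f t \<bullet> (h *\<^sub>R k') + (h *\<^sub>R f') \<bullet> k t) = (*) (f t \<bullet> k' + f' \<bullet> k t)"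
    by (auto simp: algebra_simps)
  ultimately show ?thesis by (simp add: has_field_derivative_def)
qed

lemma integral_norm_le_const:
  fixes f :: "real \<Rightarrow> 'a::euclidean_space"
  assumes "a \<le> b" "\<And>s. s \<in> {a..b} \<Longrightarrow> norm (f s) \<le> e"
  shows "norm (integral {a..b} f) \<le> e * (b - a)"
proof (cases "f integrable_on {a..b}")
  case True
  have "norm (integral {a..b} f) \<le> integral {a..b} (\<lambda>s. e)"
    by (rule integral_norm_bound_integral[OF True]) (auto intro: assms(2))
  then show ?thesis using assms(1) by (simp add: mult.commute)
next
  case False
  have "norm (f a) \<le> e" using assms by simp
  then have "0 \<le> e" by (rule order_trans[OF norm_ge_zero])
  then show ?thesis using False assms(1) by (simp add: not_integrable_integral)
qed

locale setting =
  fixes U :: "(real^('p::finite)) \<times> (real^('m::finite)) \<Rightarrow> real"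
    and f1 :: "(real^'p) \<times> (real^'m) \<Rightarrow> real^'p"
    and f2 :: "(real^'p) \<times> (real^'m) \<Rightarrow> real^'m"
    and g :: "real^'m \<Rightarrow> real^'m"
    and Dg :: "real^'m \<Rightarrow> real^'m^'m"
    and xw :: "real \<Rightarrow> real \<Rightarrow> real^'p"
    and yw :: "real \<Rightarrow> real \<Rightarrow> real^'m"
    and x0 x1 :: "real^'p" and y0 y1 :: "real^'m"
  assumes U_grad: "\<And>x y. (U has_derivative (\<lambda>(h, k). - (f1 (x, y) \<bullet> h) - (f2 (x, y) \<bullet> k))) (at (x, y))"
    and g_deriv: "\<And>y. (g has_derivative (\<lambda>h. Dg y *v h)) (at y)"
    and f1_C1: "C1_bdd_deriv f1"
    and f2_C1: "C1_bdd_deriv f2"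
    and Dg_C1: "C1_bdd_deriv Dg"
    and sol: "\<And>\<omega>. \<omega> > 0 \<Longrightarrow>
               solves2 (xw \<omega>) (\<lambda>t. f1 (xw \<omega> t, yw \<omega> t)) x0 x1 \<and>
               solves2 (yw \<omega>) (\<lambda>t. f2 (xw \<omega> t, yw \<omega> t) - \<omega>\<^sup>2 *\<^sub>R (g (yw \<omega> t) v* Dg (yw \<omega> t))) y0 y1"
    and g_y0: "g y0 = 0"
    and Dg_y1: "Dg y0 *v y1 = 0"
    and bdd: "\<exists>B. \<forall>\<omega>>0. \<forall>t\<ge>0. norm (xw \<omega> t) \<le> B \<and> norm (yw \<omega> t) \<le> B"
    and nonsing: "\<exists>\<epsilon>>0. \<forall>y\<in>ball y0 \<epsilon>. invertible (Dg y)"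
begin

definition "xd \<omega> = (SOME z'. (\<forall>t\<ge>0. (xw \<omega> has_vector_derivative z' t) (at t within {0..}) \<and>
      (z' has_vector_derivative f1 (xw \<omega> t, yw \<omega> t)) (at t within {0..})) \<and> xw \<omega> 0 = x0 \<and> z' 0 = x1)"
definition "yd \<omega> = (SOME z'. (\<forall>t\<ge>0. (yw \<omega> has_vector_derivative z' t) (at t within {0..}) \<and>
      (z' has_vector_derivative (f2 (xw \<omega> t, yw \<omega> t) - \<omega>\<^sup>2 *\<^sub>R (g (yw \<omega> t) v* Dg (yw \<omega> t)))) (at t within {0..}))
      \<and> yw \<omega> 0 = y0 \<and> z' 0 = y1)"
definition "ydd \<omega> t = f2 (xw \<omega> t, yw \<omega> t) - \<omega>\<^sup>2 *\<^sub>R (g (yw \<omega> t) v* Dg (yw \<omega> t))"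

lemma xd: assumes "\<omega> > 0"
  shows "\<And>t. t \<ge> 0 \<Longrightarrow> (xw \<omega> has_vector_derivative xd \<omega> t) (at t within {0..})"
    "\<And>t. t \<ge> 0 \<Longrightarrow> (xd \<omega> has_vector_derivative f1 (xw \<omega> t, yw \<omega> t)) (at t within {0..})"
    "xw \<omega> 0 = x0" "xd \<omega> 0 = x1"
proof -
  have "\<exists>z'. (\<forall>t\<ge>0. (xw \<omega> has_vector_derivative z' t) (at t within {0..}) \<and>
      (z' has_vector_derivative f1 (xw \<omega> t, yw \<omega> t)) (at t within {0..})) \<and> xw \<omega> 0 = x0 \<and> z' 0 = x1"
    using sol[OF assms] unfolding solves2_def by blast
  from someI_ex[OF this] show "\<And>t. t \<ge> 0 \<Longrightarrow> (xw \<omega> has_vector_derivative xd \<omega> t) (at t within {0..})"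
    "\<And>t. t \<ge> 0 \<Longrightarrow> (xd \<omega> has_vector_derivative f1 (xw \<omega> t, yw \<omega> t)) (at t within {0..})"
    "xw \<omega> 0 = x0" "xd \<omega> 0 = x1" unfolding xd_def by auto
qed

lemma yd: assumes "\<omega> > 0"
  shows "\<And>t. t \<ge> 0 \<Longrightarrow> (yw \<omega> has_vector_derivative yd \<omega> t) (at t within {0..})"
    "\<And>t. t \<ge> 0 \<Longrightarrow> (yd \<omega> has_vector_derivative ydd \<omega> t) (at t within {0..})"
    "yw \<omega> 0 = y0" "yd \<omega> 0 = y1"
proof -
  have "\<exists>z'. (\<forall>t\<ge>0. (yw \<omega> has_vector_derivative z' t) (at t within {0..}) \<and>
      (z' has_vector_derivative (f2 (xw \<omega> t, yw \<omega> t) - \<omega>\<^sup>2 *\<^sub>R (g (yw \<omega> t) v* Dg (yw \<omega> t)))) (at t within {0..}))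
      \<and> yw \<omega> 0 = y0 \<and> z' 0 = y1"
    using sol[OF assms] unfolding solves2_def by blast
  from someI_ex[OF this] show "\<And>t. t \<ge> 0 \<Longrightarrow> (yw \<omega> has_vector_derivative yd \<omega> t) (at t within {0..})"
    "\<And>t. t \<ge> 0 \<Longrightarrow> (yd \<omega> has_vector_derivative ydd \<omega> t) (at t within {0..})"
    "yw \<omega> 0 = y0" "yd \<omega> 0 = y1" unfolding yd_def ydd_def by auto
qed

definition "A = Dg y0"

lemma A_inv: "invertible A"
  using nonsing unfolding A_def by auto

definition "Ai = matrix_inv A"

lemma Ai_both: "A ** Ai = mat 1 \<and> Ai ** A = mat 1"
proof -
  have "\<exists>A'. A ** A' = mat 1 \<and> A' ** A = mat 1" using A_inv unfolding invertible_def by blast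
  then show ?thesis unfolding Ai_def matrix_inv_def by (rule someI_ex)
qed

lemma Ai: "A ** Ai = mat 1" "Ai ** A = mat 1" using Ai_both by auto

lemma vA_Ai: "(u v* A) v* Ai = u" "(u v* Ai) v* A = u"
  by (simp_all add: vector_matrix_mul_assoc Ai)

lemma y1_0: "y1 = 0"
proof -
  have "Ai *v (A *v y1) = y1" by (simp add: matrix_vector_mul_assoc Ai)
  then show ?thesis using Dg_y1 unfolding A_def by simp
qed

definition "cA = 1 / (norm Ai + 1)"

lemma cA_pos: "cA > 0" unfolding cA_def by (simp add: add_nonneg_pos)

lemma cA_bound: "cA * norm h \<le> norm (A *v h)"
proof -
  have "norm h = norm (Ai *v (A *v h))" by (simp add: matrix_vector_mul_assoc Ai)
  also have "\<dots> \<le> norm Ai * norm (A *v h)" by (rule mat_vec_norm)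
  also have "\<dots> \<le> (norm Ai + 1) * norm (A *v h)" by (simp add: mult_right_mono)
  finally have le: "norm h \<le> (norm Ai + 1) * norm (A *v h)" .
  have pos: "norm Ai + 1 > 0" by (simp add: add_nonneg_pos)
  have "cA * norm h = norm h / (norm Ai + 1)" unfolding cA_def by simp
  also have "\<dots> \<le> norm (A *v h)" using pos_divide_le_eq[OF pos] le by (simp add: mult.commute)
  finally show ?thesis .
qed

end



lemma const_on_nonneg:
  fixes E :: "real \<Rightarrow> real"
  assumes "\<And>s. s \<ge> 0 \<Longrightarrow> (E has_real_derivative 0) (at s within {0..})" "t \<ge> 0"
  shows "E t = E 0"
proof -
  have "\<And>s. s \<in> {0..} \<Longrightarrow> (E has_derivative (\<lambda>h. 0)) (at s within {0..})"
  proof -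
    fix s :: real assume "s \<in> {0..}"
    then have "(E has_derivative (*) 0) (at s within {0..})"
      using assms(1)[of s] by (simp add: has_field_derivative_def)
    moreover have "((*) (0::real)) = (\<lambda>h. 0)" by auto
    ultimately show "(E has_derivative (\<lambda>h. 0)) (at s within {0..})" by simp
  qed
  from has_derivative_zero_unique[OF convex_real_interval(1) this, of t 0] assms(2)
  show ?thesis by simp
qed

context setting begin

definition "L1 = (SOME L. L > 0 \<and> (\<forall>a b. norm (f1 a - f1 b) \<le> L * norm (a - b)))"
definition "L2 = (SOME L. L > 0 \<and> (\<forall>a b. norm (f2 a - f2 b) \<le> L * norm (a - b)))"
definition "LD = (SOME L. L > 0 \<and> (\<forall>a b. norm (Dg a - Dg b) \<le> L * norm (a - b)))"

lemma L1_both: "L1 > 0 \<and> (\<forall>a b. norm (f1 a - f1 b) \<le> L1 * norm (a - b))"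
  unfolding L1_def by (rule someI_ex[OF C1_lip[OF f1_C1]])
lemma L1: "L1 > 0" "norm (f1 a - f1 b) \<le> L1 * norm (a - b)"
  using L1_both by blast+
lemma L2_both: "L2 > 0 \<and> (\<forall>a b. norm (f2 a - f2 b) \<le> L2 * norm (a - b))"
  unfolding L2_def by (rule someI_ex[OF C1_lip[OF f2_C1]])
lemma L2: "L2 > 0" "norm (f2 a - f2 b) \<le> L2 * norm (a - b)"
  using L2_both by blast+
lemma LD_both: "LD > 0 \<and> (\<forall>a b. norm (Dg a - Dg b) \<le> LD * norm (a - b))"
  unfolding LD_def by (rule someI_ex[OF C1_lip[OF Dg_C1]])
lemma LD: "LD > 0" "norm (Dg a - Dg b) \<le> LD * norm (a - b)"
  using LD_both by blast+

lemma pair_lip1: "norm (f1 (a, b) - f1 (c, d)) \<le> L1 * (norm (a - c) + norm (b - d))"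
proof -
  have "norm (f1 (a, b) - f1 (c, d)) \<le> L1 * norm ((a, b) - (c, d))" by (rule L1)
  also have "\<dots> \<le> L1 * (norm (a - c) + norm (b - d))"
    using L1(1) norm_Pair_le[of "a - c" "b - d"] by (intro mult_left_mono) auto
  finally show ?thesis .
qed

lemma pair_lip2: "norm (f2 (a, b) - f2 (c, d)) \<le> L2 * (norm (a - c) + norm (b - d))"
proof -
  have "norm (f2 (a, b) - f2 (c, d)) \<le> L2 * norm ((a, b) - (c, d))" by (rule L2)
  also have "\<dots> \<le> L2 * (norm (a - c) + norm (b - d))"
    using L2(1) norm_Pair_le[of "a - c" "b - d"] by (intro mult_left_mono) auto
  finally show ?thesis .
qed

lemma taylor_g: "norm (g y - A *v (y - y0)) \<le> LD * (norm (y - y0))^2"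
proof -
  define r where "r = norm (y - y0)"
  define h where "h z = g z - A *v z" for z
  have "norm (h y - h y0) \<le> (LD * r) * norm (y - y0)"
  proof (rule differentiable_bound[where S="cball y0 r" and f'="\<lambda>z k. (Dg z - A) *v k"])
    show "convex (cball y0 r)" by simp
    show "(h has_derivative (\<lambda>k. (Dg z - A) *v k)) (at z within cball y0 r)" for z
    proof -
      have "(h has_derivative (\<lambda>k. Dg z *v k - A *v k)) (at z)"
        unfolding h_def by (intro derivative_intros g_deriv bounded_linear_imp_has_derivative matrix_vector_mul_bounded_linear)
      then show ?thesis by (simp add: matrix_vector_mult_diff_rdistrib has_derivative_at_withinI)
    qed
    show "onorm (\<lambda>k. (Dg z - A) *v k) \<le> LD * r" if "z \<in> cball y0 r" for z
    proof (rule onorm_le)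
      fix k
      have "norm ((Dg z - A) *v k) \<le> norm (Dg z - A) * norm k" by (rule mat_vec_norm)
      also have "\<dots> \<le> (LD * norm (z - y0)) * norm k"
        unfolding A_def by (intro mult_right_mono LD) simp
      also have "\<dots> \<le> (LD * r) * norm k"
        using that LD(1) by (intro mult_right_mono mult_left_mono) (auto simp: dist_norm norm_minus_commute)
      finally show "norm ((Dg z - A) *v k) \<le> LD * r * norm k" .
    qed
  qed (auto simp: r_def dist_norm norm_minus_commute)
  moreover have "h y - h y0 = g y - A *v (y - y0)"
    unfolding h_def using g_y0 by (simp add: matrix_vector_mult_diff_distrib)
  ultimately show ?thesis unfolding r_def by (simp add: power2_eq_square mult.assoc)
qed

definition "r0 = cA / (2 * LD)"

lemma r0_pos: "r0 > 0" unfolding r0_def using cA_pos LD(1) by simp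

lemma g_lower:
  assumes "norm (y - y0) \<le> r0"
  shows "(cA / 2) * norm (y - y0) \<le> norm (g y)"
proof -
  define d where "d = norm (y - y0)"
  have "cA * d \<le> norm (A *v (y - y0))" unfolding d_def by (rule cA_bound)
  also have "\<dots> \<le> norm (g y) + norm (g y - A *v (y - y0))"
    using norm_triangle_sub[of "A *v (y - y0)" "g y"] by (simp add: norm_minus_commute)
  also have "\<dots> \<le> norm (g y) + LD * d^2" unfolding d_def using taylor_g by simp
  finally have 1: "cA * d \<le> norm (g y) + LD * d^2" .
  have "LD * d \<le> cA / 2" using assms LD(1) unfolding d_def r0_def
    by (simp add: field_simps)
  then have "LD * d^2 \<le> (cA/2) * d" unfolding power2_eq_square
    using mult_right_mono[of "LD * d" "cA/2" d] by (simp add: d_def mult.assoc)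
  with 1 show ?thesis unfolding d_def by simp
qed

definition "E0 = x1 \<bullet> x1 + 2 * U (x0, y0)"

lemma U_comp_deriv:
  assumes "(a has_vector_derivative a') (at t within S)" "(b has_vector_derivative b') (at t within S)"
  shows "((\<lambda>s. U (a s, b s)) has_real_derivative
     (- (f1 (a t, b t) \<bullet> a') - (f2 (a t, b t) \<bullet> b'))) (at t within S)"
proof -
  have p: "((\<lambda>s. (a s, b s)) has_derivative (\<lambda>h. (h *\<^sub>R a', h *\<^sub>R b'))) (at t within S)"
    using assms unfolding has_vector_derivative_def by (intro has_derivative_Pair)
  have "((\<lambda>s. U (a s, b s)) has_derivative
      (\<lambda>h. (\<lambda>(h, k). - (f1 (a t, b t) \<bullet> h) - (f2 (a t, b t) \<bullet> k)) (h *\<^sub>R a', h *\<^sub>R b'))) (at t within S)"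
    using has_derivative_compose[OF p U_grad] by simp
  moreover have "(\<lambda>h. (\<lambda>(h, k). - (f1 (a t, b t) \<bullet> h) - (f2 (a t, b t) \<bullet> k)) (h *\<^sub>R a', h *\<^sub>R b'))
      = (*) (- (f1 (a t, b t) \<bullet> a') - (f2 (a t, b t) \<bullet> b'))"
    by (auto simp: algebra_simps)
  ultimately show ?thesis by (simp add: has_field_derivative_def)
qed

lemma g_comp_deriv:
  assumes "(b has_vector_derivative b') (at t within S)"
  shows "((\<lambda>s. g (b s)) has_vector_derivative (Dg (b t) *v b')) (at t within S)"
proof -
  have "((\<lambda>s. g (b s)) has_derivative (\<lambda>h. Dg (b t) *v (h *\<^sub>R b'))) (at t within S)"
    using has_derivative_compose[OF assms[unfolded has_vector_derivative_def] g_deriv] .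
  then show ?thesis unfolding has_vector_derivative_def by (simp add: matrix_vector_mult_scaleR)
qed

lemma energy:
  assumes "\<omega> > 0" "t \<ge> 0"
  shows "xd \<omega> t \<bullet> xd \<omega> t + yd \<omega> t \<bullet> yd \<omega> t + 2 * U (xw \<omega> t, yw \<omega> t)
         + \<omega>\<^sup>2 * (g (yw \<omega> t) \<bullet> g (yw \<omega> t)) = E0"
proof -
  define E where "E s = xd \<omega> s \<bullet> xd \<omega> s + yd \<omega> s \<bullet> yd \<omega> s + 2 * U (xw \<omega> s, yw \<omega> s)
         + \<omega>\<^sup>2 * (g (yw \<omega> s) \<bullet> g (yw \<omega> s))" for s
  have "(E has_real_derivative 0) (at s within {0..})" if s: "s \<ge> 0" for s
  proof -
    note d1 = inner_self_deriv[OF xd(2)[OF assms(1) s]]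
    note d2 = inner_self_deriv[OF yd(2)[OF assms(1) s]]
    note d3 = U_comp_deriv[OF xd(1)[OF assms(1) s] yd(1)[OF assms(1) s]]
    note d4 = inner_self_deriv[OF g_comp_deriv[OF yd(1)[OF assms(1) s]]]
    have "(E has_real_derivative
       (2 * (xd \<omega> s \<bullet> f1 (xw \<omega> s, yw \<omega> s)) + 2 * (yd \<omega> s \<bullet> ydd \<omega> s)
        + 2 * (- (f1 (xw \<omega> s, yw \<omega> s) \<bullet> xd \<omega> s) - (f2 (xw \<omega> s, yw \<omega> s) \<bullet> yd \<omega> s))
        + \<omega>\<^sup>2 * (2 * (g (yw \<omega> s) \<bullet> (Dg (yw \<omega> s) *v yd \<omega> s))))) (at s within {0..})"
      unfolding E_def by (rule DERIV_add[OF DERIV_add[OF DERIV_add[OF d1 d2] DERIV_cmult[OF d3]] DERIV_cmult[OF d4]])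
    moreover have "(2 * (xd \<omega> s \<bullet> f1 (xw \<omega> s, yw \<omega> s)) + 2 * (yd \<omega> s \<bullet> ydd \<omega> s)
        + 2 * (- (f1 (xw \<omega> s, yw \<omega> s) \<bullet> xd \<omega> s) - (f2 (xw \<omega> s, yw \<omega> s) \<bullet> yd \<omega> s))
        + \<omega>\<^sup>2 * (2 * (g (yw \<omega> s) \<bullet> (Dg (yw \<omega> s) *v yd \<omega> s)))) = 0"
    proof -
      have "yd \<omega> s \<bullet> (g (yw \<omega> s) v* Dg (yw \<omega> s)) = g (yw \<omega> s) \<bullet> (Dg (yw \<omega> s) *v yd \<omega> s)"
        by (simp add: inner_commute dot_lmul_matrix)
      moreover have "yd \<omega> s \<bullet> ydd \<omega> s = yd \<omega> s \<bullet> f2 (xw \<omega> s, yw \<omega> s) - \<omega>\<^sup>2 * (yd \<omega> s \<bullet> (g (yw \<omega> s) v* Dg (yw \<omega> s)))"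
        unfolding ydd_def by (simp add: inner_diff_right)
      moreover have "xd \<omega> s \<bullet> f1 (xw \<omega> s, yw \<omega> s) = f1 (xw \<omega> s, yw \<omega> s) \<bullet> xd \<omega> s"
        by (rule inner_commute)
      moreover have "yd \<omega> s \<bullet> f2 (xw \<omega> s, yw \<omega> s) = f2 (xw \<omega> s, yw \<omega> s) \<bullet> yd \<omega> s"
        by (rule inner_commute)
      ultimately show ?thesis by (simp add: algebra_simps)
    qed
    ultimately show ?thesis by simp
  qed
  then have "E t = E 0" using const_on_nonneg assms(2) by blast
  moreover have "E 0 = E0"
    unfolding E_def E0_def using xd(3,4)[OF assms(1)] yd(3,4)[OF assms(1)] y1_0 g_y0 by simp
  ultimately show ?thesis unfolding E_def by simp
qed

end



lemma cont_from_deriv: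
  assumes "\<And>s. s \<ge> 0 \<Longrightarrow> (f has_vector_derivative f' s) (at s within {0..})"
  shows "continuous_on {0..} f"
  apply (rule has_derivative_continuous_on)
  using assms unfolding has_vector_derivative_def by auto

context setting begin

lemma U_cont: "continuous_on S U"
proof -
  have "isCont U z" for z
    using has_derivative_continuous[OF U_grad[of "fst z" "snd z"]] by simp
  then show ?thesis by (simp add: continuous_at_imp_continuous_on)
qed

definition "Bd = (SOME B. \<forall>\<omega>>0. \<forall>t\<ge>0. norm (xw \<omega> t) \<le> B \<and> norm (yw \<omega> t) \<le> B)"

lemma Bd: "\<omega> > 0 \<Longrightarrow> t \<ge> 0 \<Longrightarrow> norm (xw \<omega> t) \<le> Bd"
  "\<omega> > 0 \<Longrightarrow> t \<ge> 0 \<Longrightarrow> norm (yw \<omega> t) \<le> Bd"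
  using someI_ex[OF bdd] unfolding Bd_def by blast+

lemma Bd_nonneg: "Bd \<ge> 0"
proof -
  have "norm (xw 1 0) \<le> Bd" using Bd(1)[of 1 0] by simp
  then show ?thesis by (rule order_trans[OF norm_ge_zero])
qed

definition "Umin = (SOME m. \<forall>x y. norm x \<le> Bd \<longrightarrow> norm y \<le> Bd \<longrightarrow> m \<le> U (x, y))"

lemma Umin: "norm x \<le> Bd \<Longrightarrow> norm y \<le> Bd \<Longrightarrow> Umin \<le> U (x, y)"
proof -
  have "\<exists>z\<in>cball 0 Bd \<times> cball 0 Bd. \<forall>w\<in>cball 0 Bd \<times> cball 0 Bd. U z \<le> U w"
    using Bd_nonneg by (intro continuous_attains_inf) (auto intro: compact_Times U_cont)
  then obtain z where "\<forall>w\<in>cball 0 Bd \<times> cball 0 Bd. U z \<le> U w" by blast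
  then have "\<forall>x y. norm x \<le> Bd \<longrightarrow> norm y \<le> Bd \<longrightarrow> U z \<le> U (x, y)" by auto
  then have "\<exists>m. \<forall>x y. norm x \<le> Bd \<longrightarrow> norm y \<le> Bd \<longrightarrow> m \<le> U (x, y)" by blast
  from someI_ex[OF this] show "norm x \<le> Bd \<Longrightarrow> norm y \<le> Bd \<Longrightarrow> Umin \<le> U (x, y)"
    unfolding Umin_def by blast
qed

definition "K2 = E0 - 2 * Umin"

lemma energy_bounds:
  assumes "\<omega> > 0" "t \<ge> 0"
  shows "xd \<omega> t \<bullet> xd \<omega> t \<le> K2" "yd \<omega> t \<bullet> yd \<omega> t \<le> K2"
    "\<omega>\<^sup>2 * (g (yw \<omega> t) \<bullet> g (yw \<omega> t)) \<le> K2"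
    "yd \<omega> t \<bullet> yd \<omega> t + \<omega>\<^sup>2 * (g (yw \<omega> t) \<bullet> g (yw \<omega> t)) \<le> K2"
proof -
  note e = energy[OF assms]
  have u: "Umin \<le> U (xw \<omega> t, yw \<omega> t)" using Umin Bd assms by blast
  have p1: "0 \<le> xd \<omega> t \<bullet> xd \<omega> t" "0 \<le> yd \<omega> t \<bullet> yd \<omega> t" by simp_all
  have p3: "0 \<le> \<omega>\<^sup>2 * (g (yw \<omega> t) \<bullet> g (yw \<omega> t))" by simp
  show "xd \<omega> t \<bullet> xd \<omega> t \<le> K2" "yd \<omega> t \<bullet> yd \<omega> t \<le> K2"
    "\<omega>\<^sup>2 * (g (yw \<omega> t) \<bullet> g (yw \<omega> t)) \<le> K2"
    "yd \<omega> t \<bullet> yd \<omega> t + \<omega>\<^sup>2 * (g (yw \<omega> t) \<bullet> g (yw \<omega> t)) \<le> K2"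
    unfolding K2_def using e u p1 p3 by linarith+
qed

lemma K2_nonneg: "K2 \<ge> 0"
proof -
  have "xd 1 0 \<bullet> xd 1 0 \<le> K2" using energy_bounds(1)[of 1 0] by simp
  moreover have "0 \<le> xd 1 0 \<bullet> xd 1 0" by simp
  ultimately show ?thesis by linarith
qed

lemma xd_bound: "\<omega> > 0 \<Longrightarrow> t \<ge> 0 \<Longrightarrow> norm (xd \<omega> t) \<le> sqrt K2"
  using energy_bounds(1) by (simp add: norm_eq_sqrt_inner)

lemma yd_bound: "\<omega> > 0 \<Longrightarrow> t \<ge> 0 \<Longrightarrow> norm (yd \<omega> t) \<le> sqrt K2"
  using energy_bounds(2) by (simp add: norm_eq_sqrt_inner)

lemma g_bound:
  assumes "\<omega> > 0" "t \<ge> 0"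
  shows "norm (g (yw \<omega> t)) \<le> sqrt K2 / \<omega>"
proof -
  have "(\<omega> * norm (g (yw \<omega> t)))^2 \<le> K2"
    using energy_bounds(3)[OF assms] by (simp add: power_mult_distrib power2_norm_eq_inner)
  then have "\<omega> * norm (g (yw \<omega> t)) \<le> sqrt K2"
    using real_le_rsqrt by blast
  then show ?thesis using assms(1) by (simp add: field_simps)
qed

definition "R = 2 * sqrt K2 / cA"
definition "\<omega>0 = R / r0 + 1"

lemma R_nonneg: "R \<ge> 0" unfolding R_def using cA_pos K2_nonneg by simp

lemma \<omega>0_pos: "\<omega>0 > 0" unfolding \<omega>0_def using R_nonneg r0_pos by (simp add: add_nonneg_pos)

lemma R_small: assumes "\<omega> \<ge> \<omega>0" shows "R / \<omega> < r0"
proof -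
  have w: "\<omega> > 0" using assms \<omega>0_pos by simp
  have "R / r0 < \<omega>" using assms unfolding \<omega>0_def by simp
  then have "R < \<omega> * r0" using pos_divide_less_eq[OF r0_pos] by simp
  then have "R < r0 * \<omega>" by (simp only: mult.commute)
  then show ?thesis using pos_divide_less_eq[OF w] by simp
qed

lemma yw_cont: assumes "\<omega> > 0" shows "continuous_on {0..} (yw \<omega>)"
  by (rule cont_from_deriv, rule yd(1)[OF assms])
lemma xw_cont: assumes "\<omega> > 0" shows "continuous_on {0..} (xw \<omega>)"
  by (rule cont_from_deriv, rule xd(1)[OF assms])
lemma yd_cont: assumes "\<omega> > 0" shows "continuous_on {0..} (yd \<omega>)"
  by (rule cont_from_deriv, rule yd(2)[OF assms])
lemma xd_cont: assumes "\<omega> > 0" shows "continuous_on {0..} (xd \<omega>)"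
  by (rule cont_from_deriv, rule xd(2)[OF assms])

lemma y_close:
  assumes "\<omega> \<ge> \<omega>0" "t \<ge> 0"
  shows "norm (yw \<omega> t - y0) \<le> R / \<omega>"
proof (rule ccontr)
  assume "\<not> ?thesis"
  then have big: "norm (yw \<omega> t - y0) > R / \<omega>" by simp
  have wpos: "\<omega> > 0" using assms \<omega>0_pos by simp
  define v where "v = min (norm (yw \<omega> t - y0)) r0"
  have vR: "v > R / \<omega>" using big R_small[OF assms(1)] unfolding v_def by simp
  have cont: "continuous_on {0..t} (\<lambda>s. norm (yw \<omega> s - y0))"
    by (intro continuous_intros continuous_on_subset[OF yw_cont[OF wpos]]) auto
  have "\<exists>s. 0 \<le> s \<and> s \<le> t \<and> norm (yw \<omega> s - y0) = v"
    by (rule IVT'[OF _ _ assms(2) cont]) (use yd(3)[OF wpos] vR R_nonneg wpos r0_pos in \<open>auto simp: v_def\<close>)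
  then obtain s where s: "0 \<le> s" "norm (yw \<omega> s - y0) = v" by blast
  have "v \<le> r0" unfolding v_def by simp
  then have "(cA / 2) * v \<le> norm (g (yw \<omega> s))" using g_lower[of "yw \<omega> s"] s(2) by simp
  also have "\<dots> \<le> sqrt K2 / \<omega>" using g_bound[OF wpos s(1)] .
  finally have c: "(cA / 2) * v \<le> sqrt K2 / \<omega>" .
  have "v = ((cA/2) * v) / (cA/2)" using cA_pos by simp
  also have "\<dots> \<le> (sqrt K2/\<omega>)/(cA/2)" by (rule divide_right_mono[OF c]) (use cA_pos in simp)
  also have "\<dots> = R/\<omega>" unfolding R_def by (simp add: field_simps)
  finally show False using vR by simp
qed

end



lemma arith1:
  fixes a b c d e L :: real
  assumes "a \<ge> 0" "b \<ge> 0" "c \<ge> 0" "L \<ge> 0" "e \<le> L * (a + c)" "c \<le> d" "p \<le> a * b" "q \<le> b * e"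
  shows "2 * p + 2 * q \<le> (1 + 2 * L) * (a^2 + b^2) + L * d^2"
proof -
  have 1: "2*a*b \<le> a^2 + b^2" using sum_squares_bound[of a b] by (simp add: power2_eq_square)
  have "b * e \<le> b * (L * (a + c))" using assms by (intro mult_left_mono) auto
  have 2: "2*a*b*L \<le> L*(a^2 + b^2)" using mult_right_mono[OF 1 assms(4)] by (simp add: algebra_simps)
  have 3: "2*b*c \<le> b^2 + c^2" using sum_squares_bound[of b c] by (simp add: power2_eq_square)
  have 4: "2*b*c*L \<le> L*(b^2 + c^2)" using mult_right_mono[OF 3 assms(4)] by (simp add: algebra_simps)
  have "c^2 \<le> d^2" using assms(3,6) by (intro power_mono) auto
  then have 5: "L * c^2 \<le> L * d^2" using assms(4) by (intro mult_left_mono) auto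
  have "2 * p + 2 * q \<le> 2*a*b + 2*(b * (L * (a + c)))"
    using assms(7,8) \<open>b * e \<le> b * (L * (a + c))\<close> by linarith
  also have "\<dots> = 2*a*b + 2*a*b*L + 2*b*c*L" by (simp add: algebra_simps)
  also have "\<dots> \<le> (1 + 2 * L) * (a^2 + b^2) + L * d^2"
  proof -
    have "0 \<le> L * a^2" "0 \<le> L * b^2" using assms(4) by simp_all
    then show ?thesis using 1 2 4 5 by (simp add: algebra_simps)
  qed
  finally show ?thesis .
qed

lemma cauchy_rate:
  fixes F :: "real \<Rightarrow> 'a::banach"
  assumes w0: "w0 > 0" and K: "K \<ge> 0"
    and H: "\<And>w w'. w \<ge> w0 \<Longrightarrow> w' \<ge> w0 \<Longrightarrow> norm (F w - F w') \<le> K/w + K/w'"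
  shows "\<exists>l. \<forall>w\<ge>w0. norm (F w - l) \<le> K/w"
proof -
  define s where "s n = F (w0 + real n)" for n
  have lim0: "(\<lambda>n. K / (w0 + real n)) \<longlonglongrightarrow> 0"
  proof -
    have "filterlim (\<lambda>n. w0 + real n) at_top sequentially"
      by (rule filterlim_tendsto_add_at_top[OF tendsto_const filterlim_real_sequentially])
    then have "(\<lambda>n. inverse (w0 + real n)) \<longlonglongrightarrow> 0"
      using tendsto_inverse_0_at_top by blast
    then have "(\<lambda>n. K * inverse (w0 + real n)) \<longlonglongrightarrow> K * 0"
      by (intro tendsto_mult tendsto_const)
    then show ?thesis by (simp add: divide_inverse)
  qed
  have "Cauchy s"
  proof (rule metric_CauchyI)
    fix e :: real assume e: "e > 0"
    have e2: "(0::real) < e/2" using e by simp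
    have "\<forall>\<^sub>F n in sequentially. K / (w0 + real n) < e/2"
      by (rule order_tendstoD(2)[OF lim0 e2])
    then obtain M where M: "\<And>n. n \<ge> M \<Longrightarrow> K / (w0 + real n) < e/2"
      unfolding eventually_sequentially by blast
    show "\<exists>M. \<forall>m\<ge>M. \<forall>n\<ge>M. dist (s m) (s n) < e"
    proof (intro exI allI impI)
      fix m n assume "m \<ge> M" "n \<ge> M"
      have "dist (s m) (s n) \<le> K/(w0 + real m) + K/(w0 + real n)"
        unfolding s_def dist_norm using w0 by (intro H) auto
      also have "\<dots> < e"
      proof -
        have "K / (w0 + real m) < e/2" "K / (w0 + real n) < e/2"
          using M \<open>m \<ge> M\<close> \<open>n \<ge> M\<close> by blast+
        then show ?thesis by linarith
      qed
      finally show "dist (s m) (s n) < e" .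
    qed
  qed
  then obtain l where l: "s \<longlonglongrightarrow> l" using Cauchy_convergent_iff convergent_def by blast
  have "norm (F w - l) \<le> K/w" if w: "w \<ge> w0" for w
  proof -
    have a: "(\<lambda>n. norm (F w - s n)) \<longlonglongrightarrow> norm (F w - l)"
      by (intro tendsto_intros l)
    have b: "(\<lambda>n. K/w + K / (w0 + real n)) \<longlonglongrightarrow> K/w + 0"
      by (intro tendsto_intros lim0)
    have c: "\<exists>N. \<forall>n\<ge>N. norm (F w - s n) \<le> K/w + K / (w0 + real n)"
      unfolding s_def using w w0 by (intro exI[of _ 0] allI impI H) auto
    show ?thesis using LIMSEQ_le[OF a b c] by simp
  qed
  then show ?thesis by blast
qed

context setting begin

definition "C1 = 1 + 2 * L1"

lemma C1_pos: "C1 > 0" unfolding C1_def using L1(1) by simp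

lemma x_cauchy_sq:
  assumes w: "\<omega> \<ge> \<omega>0" "\<omega>' \<ge> \<omega>0" and t: "t \<ge> 0"
  shows "(norm (xw \<omega> t - xw \<omega>' t))^2 + (norm (xd \<omega> t - xd \<omega>' t))^2
      \<le> (L1 * (R/\<omega> + R/\<omega>')^2 * t) * exp (C1 * t)"
proof -
  have wp: "\<omega> > 0" "\<omega>' > 0" using w \<omega>0_pos by auto
  define dx where "dx s = xw \<omega> s - xw \<omega>' s" for s
  define dv where "dv s = xd \<omega> s - xd \<omega>' s" for s
  define df where "df s = f1 (xw \<omega> s, yw \<omega> s) - f1 (xw \<omega>' s, yw \<omega>' s)" for s
  define \<phi> where "\<phi> s = dx s \<bullet> dx s + dv s \<bullet> dv s" for s
  define \<delta> where "\<delta> = R/\<omega> + R/\<omega>'"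
  have d: "(\<phi> has_real_derivative (2 * (dx s \<bullet> dv s) + 2 * (dv s \<bullet> df s))) (at s within {0..t})"
    if s: "s \<in> {0..t}" for s
  proof -
    have s0: "s \<ge> 0" using s by simp
    have "(dx has_vector_derivative dv s) (at s within {0..})"
      unfolding dx_def dv_def by (intro has_vector_derivative_diff xd(1)[OF wp(1) s0] xd(1)[OF wp(2) s0])
    moreover have "(dv has_vector_derivative df s) (at s within {0..})"
      unfolding dv_def df_def by (intro has_vector_derivative_diff xd(2)[OF wp(1) s0] xd(2)[OF wp(2) s0])
    ultimately have "(\<phi> has_real_derivative (2 * (dx s \<bullet> dv s) + 2 * (dv s \<bullet> df s))) (at s within {0..})"
      unfolding \<phi>_def by (intro DERIV_add inner_self_deriv)
    then show ?thesis by (rule DERIV_subset) auto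
  qed
  have b: "2 * (dx s \<bullet> dv s) + 2 * (dv s \<bullet> df s) \<le> C1 * \<phi> s + L1 * \<delta>^2" if s: "s \<in> {0..t}" for s
  proof -
    have s0: "s \<ge> 0" using s by simp
    have yy: "norm (yw \<omega> s - yw \<omega>' s) \<le> \<delta>"
    proof -
      have "norm (yw \<omega> s - yw \<omega>' s) \<le> norm (yw \<omega> s - y0) + norm (yw \<omega>' s - y0)"
        using norm_triangle_ineq4[of "yw \<omega> s - y0" "yw \<omega>' s - y0"] by simp
      also have "\<dots> \<le> \<delta>" unfolding \<delta>_def using y_close[OF w(1) s0] y_close[OF w(2) s0] by simp
      finally show ?thesis .
    qed
    have e: "norm (df s) \<le> L1 * (norm (dx s) + norm (yw \<omega> s - yw \<omega>' s))"
      unfolding df_def dx_def by (rule pair_lip1)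
    have "2 * (dx s \<bullet> dv s) + 2 * (dv s \<bullet> df s) \<le> (1 + 2 * L1) * ((norm (dx s))^2 + (norm (dv s))^2) + L1 * \<delta>^2"
    proof (rule arith1[where c="norm (yw \<omega> s - yw \<omega>' s)" and e="norm (df s)"])
      show "dx s \<bullet> dv s \<le> norm (dx s) * norm (dv s)" by (rule order_trans[OF abs_ge_self Cauchy_Schwarz_ineq2])
      show "dv s \<bullet> df s \<le> norm (dv s) * norm (df s)" by (rule order_trans[OF abs_ge_self Cauchy_Schwarz_ineq2])
    qed (use e yy L1(1) in auto)
    moreover have "\<phi> s = (norm (dx s))^2 + (norm (dv s))^2"
      unfolding \<phi>_def by (simp add: power2_norm_eq_inner)
    ultimately show ?thesis unfolding C1_def by simp
  qed
  have "\<phi> t \<le> (\<phi> 0 + L1 * \<delta>^2 * t) * exp (C1 * t)"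
    by (rule gronwall[OF t d b]) (use C1_pos L1(1) in auto)
  moreover have "\<phi> 0 = 0"
    unfolding \<phi>_def dx_def dv_def using xd(3,4)[OF wp(1)] xd(3,4)[OF wp(2)] by simp
  moreover have "\<phi> t = (norm (xw \<omega> t - xw \<omega>' t))^2 + (norm (xd \<omega> t - xd \<omega>' t))^2"
    unfolding \<phi>_def dx_def dv_def by (simp add: power2_norm_eq_inner)
  ultimately show ?thesis unfolding \<delta>_def by (simp add: mult.assoc)
qed

definition "Wt t = R * sqrt (L1 * t * exp (C1 * t))"

lemma Wt_nonneg: "t \<ge> 0 \<Longrightarrow> Wt t \<ge> 0"
  unfolding Wt_def using R_nonneg L1(1) by simp

lemma Wt_mono: "0 \<le> s \<Longrightarrow> s \<le> t \<Longrightarrow> Wt s \<le> Wt t"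
  unfolding Wt_def using R_nonneg L1(1) C1_pos
  by (intro mult_left_mono real_sqrt_le_mono mult_mono) auto

lemma x_cauchy:
  assumes w: "\<omega> \<ge> \<omega>0" "\<omega>' \<ge> \<omega>0" and t: "t \<ge> 0"
  shows "norm (xw \<omega> t - xw \<omega>' t) \<le> Wt t/\<omega> + Wt t/\<omega>'"
    "norm (xd \<omega> t - xd \<omega>' t) \<le> Wt t/\<omega> + Wt t/\<omega>'"
proof -
  have wp: "\<omega> > 0" "\<omega>' > 0" using w \<omega>0_pos by auto
  define Q where "Q = (L1 * (R/\<omega> + R/\<omega>')^2 * t) * exp (C1 * t)"
  have "sqrt Q = (R/\<omega> + R/\<omega>') * sqrt (L1 * t * exp (C1 * t))"
    unfolding Q_def using wp R_nonneg by (simp add: real_sqrt_mult ac_simps)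
  also have "\<dots> = Wt t/\<omega> + Wt t/\<omega>'" unfolding Wt_def by (simp add: field_simps)
  finally have sQ: "sqrt Q = Wt t/\<omega> + Wt t/\<omega>'" .
  note q = x_cauchy_sq[OF w t, folded Q_def]
  have "(norm (xw \<omega> t - xw \<omega>' t))^2 \<le> Q" using q by (smt (verit) zero_le_power2)
  then show "norm (xw \<omega> t - xw \<omega>' t) \<le> Wt t/\<omega> + Wt t/\<omega>'"
    using real_le_rsqrt sQ by metis
  have "(norm (xd \<omega> t - xd \<omega>' t))^2 \<le> Q" using q by (smt (verit) zero_le_power2)
  then show "norm (xd \<omega> t - xd \<omega>' t) \<le> Wt t/\<omega> + Wt t/\<omega>'"
    using real_le_rsqrt sQ by metis
qed

definition "xs t = (SOME l. \<forall>w\<ge>\<omega>0. norm (xw w t - l) \<le> Wt t/w)"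
definition "xds t = (SOME l. \<forall>w\<ge>\<omega>0. norm (xd w t - l) \<le> Wt t/w)"

lemma xs_close: assumes "t \<ge> 0" "\<omega> \<ge> \<omega>0"
  shows "norm (xw \<omega> t - xs t) \<le> Wt t/\<omega>" "norm (xd \<omega> t - xds t) \<le> Wt t/\<omega>"
proof -
  have "\<exists>l. \<forall>w\<ge>\<omega>0. norm (xw w t - l) \<le> Wt t/w"
    by (rule cauchy_rate[OF \<omega>0_pos Wt_nonneg[OF assms(1)]]) (use x_cauchy(1) assms(1) in blast)
  from someI_ex[OF this] show "norm (xw \<omega> t - xs t) \<le> Wt t/\<omega>" unfolding xs_def using assms(2) by blast
  have "\<exists>l. \<forall>w\<ge>\<omega>0. norm (xd w t - l) \<le> Wt t/w"
    by (rule cauchy_rate[OF \<omega>0_pos Wt_nonneg[OF assms(1)]]) (use x_cauchy(2) assms(1) in blast)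
  from someI_ex[OF this] show "norm (xd \<omega> t - xds t) \<le> Wt t/\<omega>" unfolding xds_def using assms(2) by blast
qed

end



lemma lim_inv_seq:
  assumes "w0 > 0"
  shows "(\<lambda>n. K / (w0 + real n)) \<longlonglongrightarrow> 0"
proof -
  have "filterlim (\<lambda>n. w0 + real n) at_top sequentially"
    by (rule filterlim_tendsto_add_at_top[OF tendsto_const filterlim_real_sequentially])
  then have "(\<lambda>n. inverse (w0 + real n)) \<longlonglongrightarrow> 0"
    using tendsto_inverse_0_at_top by blast
  then have "(\<lambda>n. K * inverse (w0 + real n)) \<longlonglongrightarrow> K * 0"
    by (intro tendsto_mult tendsto_const)
  then show ?thesis by (simp add: divide_inverse)
qed

lemma deriv_limit:
  fixes F :: "nat \<Rightarrow> real \<Rightarrow> 'a::banach"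
  assumes T: "T > 0"
    and dF: "\<And>n s. s \<in> {0..T} \<Longrightarrow> (F n has_vector_derivative F' n s) (at s within {0..T})"
    and lim: "\<And>s. s \<in> {0..T} \<Longrightarrow> (\<lambda>n. F n s) \<longlonglongrightarrow> G s"
    and unif: "\<And>e. e > 0 \<Longrightarrow> \<forall>\<^sub>F n in sequentially. \<forall>s\<in>{0..T}. norm (F' n s - G' s) \<le> e"
    and s: "s \<in> {0..T}"
  shows "(G has_vector_derivative G' s) (at s within {0..T})"
proof -
  have "\<exists>g. \<forall>x\<in>{0..T}. (\<lambda>n. F n x) \<longlonglongrightarrow> g x \<and> (g has_derivative (\<lambda>h. h *\<^sub>R G' x)) (at x within {0..T})"
  proof (rule has_derivative_sequence[where f'="\<lambda>n x h. h *\<^sub>R F' n x"])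
    show "convex {0..T}" by simp
    show "(F n has_derivative (\<lambda>h. h *\<^sub>R F' n x)) (at x within {0..T})" if "x \<in> {0..T}" for n x
      using dF[OF that] unfolding has_vector_derivative_def .
    show "\<forall>\<^sub>F n in sequentially. \<forall>x\<in>{0..T}. \<forall>h. norm (h *\<^sub>R F' n x - h *\<^sub>R G' x) \<le> e * norm h"
      if e: "e > 0" for e
    proof -
      have "\<forall>\<^sub>F n in sequentially. \<forall>s\<in>{0..T}. norm (F' n s - G' s) \<le> e" by (rule unif[OF e])
      then show ?thesis
      proof (rule eventually_mono)
        fix n assume H: "\<forall>s\<in>{0..T}. norm (F' n s - G' s) \<le> e"
        show "\<forall>x\<in>{0..T}. \<forall>h. norm (h *\<^sub>R F' n x - h *\<^sub>R G' x) \<le> e * norm h"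
        proof (intro ballI allI)
          fix x h assume x: "x \<in> {0..T}"
          have "norm (h *\<^sub>R F' n x - h *\<^sub>R G' x) = \<bar>h\<bar> * norm (F' n x - G' x)"
            by (simp add: scaleR_diff_right[symmetric])
          also have "\<dots> \<le> \<bar>h\<bar> * e" using H x by (intro mult_left_mono) auto
          finally show "norm (h *\<^sub>R F' n x - h *\<^sub>R G' x) \<le> e * norm h" by (simp add: mult.commute)
        qed
      qed
    qed
    show "0 \<in> {0..T}" using T by simp
    show "(\<lambda>n. F n 0) \<longlonglongrightarrow> G 0" using lim T by simp
  qed
  then obtain g where g: "\<And>x. x \<in> {0..T} \<Longrightarrow> (\<lambda>n. F n x) \<longlonglongrightarrow> g x"
    "\<And>x. x \<in> {0..T} \<Longrightarrow> (g has_derivative (\<lambda>h. h *\<^sub>R G' x)) (at x within {0..T})" by blast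
  have eq: "\<And>x. x \<in> {0..T} \<Longrightarrow> G x = g x" using g(1) lim LIMSEQ_unique by blast
  show ?thesis unfolding has_vector_derivative_def
    by (rule has_derivative_transform[OF s eq g(2)[OF s]])
qed

lemma within_localize:
  assumes "(f has_vector_derivative f') (at s within {0..s+1})" "s \<ge> 0"
  shows "(f has_vector_derivative f') (at s within {0..})"
proof -
  have "at s within {0..s+1} = at s within {0..}"
    by (rule at_within_nhd[of s "{..<s+1}"]) (use assms(2) in auto)
  then show ?thesis using assms(1) by simp
qed

lemma le_of_rate:
  fixes a b c w0 :: real
  assumes "w0 > 0" "c \<ge> 0" "\<And>w. w \<ge> w0 \<Longrightarrow> a \<le> b + c / w"
  shows "a \<le> b"
proof -
  have "(\<lambda>n. b + c / (w0 + real n)) \<longlonglongrightarrow> b + 0"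
    by (intro tendsto_intros lim_inv_seq assms(1))
  moreover have "\<exists>N. \<forall>n\<ge>N. a \<le> b + c / (w0 + real n)" using assms by auto
  ultimately show ?thesis using LIMSEQ_le_const[of _ "b + 0" a] by simp
qed

context setting begin

definition "\<omega>n n = \<omega>0 + real n"

lemma \<omega>n: "\<omega>n n \<ge> \<omega>0" "\<omega>n n > 0" unfolding \<omega>n_def using \<omega>0_pos by auto

lemma xs_lim: "t \<ge> 0 \<Longrightarrow> (\<lambda>n. xw (\<omega>n n) t) \<longlonglongrightarrow> xs t"
  "t \<ge> 0 \<Longrightarrow> (\<lambda>n. xd (\<omega>n n) t) \<longlonglongrightarrow> xds t"
proof -
  assume t: "t \<ge> 0"
  have z: "(\<lambda>n. Wt t / (\<omega>0 + real n)) \<longlonglongrightarrow> 0" by (rule lim_inv_seq[OF \<omega>0_pos])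
  have "(\<lambda>n. norm (xw (\<omega>n n) t - xs t)) \<longlonglongrightarrow> 0"
  proof (rule Lim_null_comparison[OF _ z])
    show "\<forall>\<^sub>F n in sequentially. norm (norm (xw (\<omega>n n) t - xs t)) \<le> Wt t / (\<omega>0 + real n)"
      using xs_close(1)[OF t \<omega>n(1)] unfolding \<omega>n_def by simp
  qed
  then show "(\<lambda>n. xw (\<omega>n n) t) \<longlonglongrightarrow> xs t" using tendsto_norm_zero_iff LIM_zero_iff by blast
  have "(\<lambda>n. norm (xd (\<omega>n n) t - xds t)) \<longlonglongrightarrow> 0"
  proof (rule Lim_null_comparison[OF _ z])
    show "\<forall>\<^sub>F n in sequentially. norm (norm (xd (\<omega>n n) t - xds t)) \<le> Wt t / (\<omega>0 + real n)"
      using xs_close(2)[OF t \<omega>n(1)] unfolding \<omega>n_def by simp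
  qed
  then show "(\<lambda>n. xd (\<omega>n n) t) \<longlonglongrightarrow> xds t" using tendsto_norm_zero_iff LIM_zero_iff by blast
qed

lemma xs0: "xs 0 = x0" "xds 0 = x1"
proof -
  have "norm (x0 - xs 0) \<le> 0" using xs_close(1)[of 0 \<omega>0] xd(3)[OF \<omega>0_pos] unfolding Wt_def by simp
  then show "xs 0 = x0" by simp
  have "norm (x1 - xds 0) \<le> 0" using xs_close(2)[of 0 \<omega>0] xd(4)[OF \<omega>0_pos] unfolding Wt_def by simp
  then show "xds 0 = x1" by simp
qed

lemma xs_bd: assumes "t \<ge> 0" shows "norm (xs t) \<le> Bd" "norm (xds t) \<le> sqrt K2"
proof -
  show "norm (xs t) \<le> Bd"
  proof (rule le_of_rate[OF \<omega>0_pos Wt_nonneg[OF assms]])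
    fix w assume w: "w \<ge> \<omega>0"
    have "norm (xs t) \<le> norm (xw w t) + norm (xw w t - xs t)"
      using norm_triangle_sub[of "xs t" "xw w t"] by (simp add: norm_minus_commute)
    then show "norm (xs t) \<le> Bd + Wt t / w"
      using Bd(1)[of w t] xs_close(1)[OF assms w] w \<omega>0_pos assms by simp
  qed
  show "norm (xds t) \<le> sqrt K2"
  proof (rule le_of_rate[OF \<omega>0_pos Wt_nonneg[OF assms]])
    fix w assume w: "w \<ge> \<omega>0"
    have "norm (xds t) \<le> norm (xd w t) + norm (xd w t - xds t)"
      using norm_triangle_sub[of "xds t" "xd w t"] by (simp add: norm_minus_commute)
    then show "norm (xds t) \<le> sqrt K2 + Wt t / w"
      using xd_bound[of w t] xs_close(2)[OF assms w] w \<omega>0_pos assms by simp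
  qed
qed

lemma xs_deriv:
  assumes s: "s \<ge> 0"
  shows "(xds has_vector_derivative f1 (xs s, y0)) (at s within {0..})"
    "(xs has_vector_derivative xds s) (at s within {0..})"
proof -
  define T where "T = s + 1"
  have T: "T > 0" "s \<in> {0..T}" unfolding T_def using s by auto
  have ev: "\<forall>\<^sub>F n in sequentially. Q / \<omega>n n \<le> e" if "e > 0" for Q e :: real
  proof -
    have "\<forall>\<^sub>F n in sequentially. Q / (\<omega>0 + real n) < e"
      by (rule order_tendstoD(2)[OF lim_inv_seq[OF \<omega>0_pos] that])
    then show ?thesis unfolding \<omega>n_def by (rule eventually_mono) simp
  qed
  have "(xds has_vector_derivative f1 (xs s, y0)) (at s within {0..T})"
  proof (rule deriv_limit[where F="\<lambda>n. xd (\<omega>n n)" and F'="\<lambda>n s. f1 (xw (\<omega>n n) s, yw (\<omega>n n) s)", OF T(1) _ _ _ T(2)])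
    show "(xd (\<omega>n n) has_vector_derivative f1 (xw (\<omega>n n) u, yw (\<omega>n n) u)) (at u within {0..T})"
      if "u \<in> {0..T}" for n u
      using that by (intro has_vector_derivative_within_subset[OF xd(2)[OF \<omega>n(2)]]) auto
    show "(\<lambda>n. xd (\<omega>n n) u) \<longlonglongrightarrow> xds u" if "u \<in> {0..T}" for u using xs_lim(2) that by simp
    show "\<forall>\<^sub>F n in sequentially. \<forall>u\<in>{0..T}. norm (f1 (xw (\<omega>n n) u, yw (\<omega>n n) u) - f1 (xs u, y0)) \<le> e"
      if e: "e > 0" for e
      using ev[OF e, of "L1 * (Wt T + R)"]
    proof (rule eventually_mono)
      fix n assume n: "L1 * (Wt T + R) / \<omega>n n \<le> e"
      show "\<forall>u\<in>{0..T}. norm (f1 (xw (\<omega>n n) u, yw (\<omega>n n) u) - f1 (xs u, y0)) \<le> e"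
      proof
        fix u assume u: "u \<in> {0..T}"
        have "norm (f1 (xw (\<omega>n n) u, yw (\<omega>n n) u) - f1 (xs u, y0))
            \<le> L1 * (norm (xw (\<omega>n n) u - xs u) + norm (yw (\<omega>n n) u - y0))" by (rule pair_lip1)
        also have "\<dots> \<le> L1 * (Wt T / \<omega>n n + R / \<omega>n n)"
        proof (intro mult_left_mono add_mono)
          have "Wt u / \<omega>n n \<le> Wt T / \<omega>n n"
            using Wt_mono[of u T] u \<omega>n(2)[of n] by (intro divide_right_mono) auto
          then show "norm (xw (\<omega>n n) u - xs u) \<le> Wt T / \<omega>n n"
            using xs_close(1)[of u "\<omega>n n"] u \<omega>n(1) by force
          show "norm (yw (\<omega>n n) u - y0) \<le> R / \<omega>n n" using y_close[OF \<omega>n(1)] u by simp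
        qed (use L1(1) in simp)
        also have "\<dots> = L1 * (Wt T + R) / \<omega>n n" using \<omega>n(2)[of n] by (simp add: field_simps)
        also have "\<dots> \<le> e" by (rule n)
        finally show "norm (f1 (xw (\<omega>n n) u, yw (\<omega>n n) u) - f1 (xs u, y0)) \<le> e" .
      qed
    qed
  qed
  then show "(xds has_vector_derivative f1 (xs s, y0)) (at s within {0..})"
    using within_localize s unfolding T_def by blast
  have "(xs has_vector_derivative xds s) (at s within {0..T})"
  proof (rule deriv_limit[where F="\<lambda>n. xw (\<omega>n n)" and F'="\<lambda>n s. xd (\<omega>n n) s", OF T(1) _ _ _ T(2)])
    show "(xw (\<omega>n n) has_vector_derivative xd (\<omega>n n) u) (at u within {0..T})"
      if "u \<in> {0..T}" for n u
      using that by (intro has_vector_derivative_within_subset[OF xd(1)[OF \<omega>n(2)]]) auto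
    show "(\<lambda>n. xw (\<omega>n n) u) \<longlonglongrightarrow> xs u" if "u \<in> {0..T}" for u using xs_lim(1) that by simp
    show "\<forall>\<^sub>F n in sequentially. \<forall>u\<in>{0..T}. norm (xd (\<omega>n n) u - xds u) \<le> e"
      if e: "e > 0" for e
      using ev[OF e, of "Wt T"]
    proof (rule eventually_mono)
      fix n assume n: "Wt T / \<omega>n n \<le> e"
      show "\<forall>u\<in>{0..T}. norm (xd (\<omega>n n) u - xds u) \<le> e"
      proof
        fix u assume u: "u \<in> {0..T}"
        have "Wt u / \<omega>n n \<le> Wt T / \<omega>n n"
          using Wt_mono[of u T] u \<omega>n(2)[of n] by (intro divide_right_mono) auto
        then show "norm (xd (\<omega>n n) u - xds u) \<le> e"
          using xs_close(2)[of u "\<omega>n n"] u \<omega>n(1) n by force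
      qed
    qed
  qed
  then show "(xs has_vector_derivative xds s) (at s within {0..})"
    using within_localize s unfolding T_def by blast
qed

end



context setting begin

lemma limit_energy:
  assumes t: "t \<ge> 0"
  shows "xds t \<bullet> xds t + 2 * U (xs t, y0) = E0"
proof -
  define E where "E s = xds s \<bullet> xds s + 2 * U (xs s, y0)" for s
  have "(E has_real_derivative 0) (at s within {0..})" if s: "s \<ge> 0" for s
  proof -
    have c: "((\<lambda>_. y0) has_vector_derivative 0) (at s within {0..})" by (rule has_vector_derivative_const)
    note d1 = inner_self_deriv[OF xs_deriv(1)[OF s]]
    note d3 = U_comp_deriv[OF xs_deriv(2)[OF s] c]
    have "(E has_real_derivative (2 * (xds s \<bullet> f1 (xs s, y0)) + 2 * (- (f1 (xs s, y0) \<bullet> xds s) - (f2 (xs s, y0) \<bullet> 0))))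
        (at s within {0..})"
      unfolding E_def by (rule DERIV_add[OF d1 DERIV_cmult[OF d3]])
    moreover have "xds s \<bullet> f1 (xs s, y0) = f1 (xs s, y0) \<bullet> xds s" by (rule inner_commute)
    ultimately show ?thesis by simp
  qed
  then have "E t = E 0" using const_on_nonneg t by blast
  then show ?thesis unfolding E_def E0_def using xs0 by simp
qed

definition "MU = norm (f1 0) + norm (f2 0) + (L1 + L2) * (2 * Bd)"

lemma MU_nonneg: "MU \<ge> 0" unfolding MU_def using L1(1) L2(1) Bd_nonneg by simp

lemma U_lip:
  assumes "norm x \<le> Bd" "norm y \<le> Bd" "norm x' \<le> Bd" "norm y' \<le> Bd"
  shows "\<bar>U (x, y) - U (x', y')\<bar> \<le> MU * (norm (x - x') + norm (y - y'))"
proof -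
  let ?S = "cball (0::real^'p) Bd \<times> cball (0::real^'m) Bd"
  have "norm (U (x, y) - U (x', y')) \<le> MU * norm ((x, y) - (x', y'))"
  proof (rule differentiable_bound[where S="?S" and f'="\<lambda>z. (\<lambda>(h, k). - (f1 z \<bullet> h) - (f2 z \<bullet> k))"])
    show "convex ?S" by (intro convex_Times convex_cball)
    show "(U has_derivative (\<lambda>(h, k). - (f1 z \<bullet> h) - (f2 z \<bullet> k))) (at z within ?S)" for z
      using U_grad[of "fst z" "snd z"] by (simp add: has_derivative_at_withinI)
    show "onorm (\<lambda>(h, k). - (f1 z \<bullet> h) - (f2 z \<bullet> k)) \<le> MU" if z: "z \<in> ?S" for z
    proof (rule onorm_le)
      fix hk :: "(real^'p) \<times> (real^'m)"
      obtain h k where hk: "hk = (h, k)" by (cases hk)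
      have nz: "norm z \<le> 2 * Bd"
        using z norm_Pair_le[of "fst z" "snd z"] by (cases z) auto
      have b1: "norm (f1 z) \<le> norm (f1 0) + L1 * (2 * Bd)"
      proof -
        have "norm (f1 z) \<le> norm (f1 0) + norm (f1 z - f1 0)" by (rule norm_triangle_sub)
        also have "\<dots> \<le> norm (f1 0) + L1 * norm (z - 0)" using L1(2) by (intro add_left_mono)
        also have "\<dots> \<le> norm (f1 0) + L1 * (2 * Bd)" using nz L1(1) by (intro add_left_mono mult_left_mono) auto
        finally show ?thesis .
      qed
      have b2: "norm (f2 z) \<le> norm (f2 0) + L2 * (2 * Bd)"
      proof -
        have "norm (f2 z) \<le> norm (f2 0) + norm (f2 z - f2 0)" by (rule norm_triangle_sub)
        also have "\<dots> \<le> norm (f2 0) + L2 * norm (z - 0)" using L2(2) by (intro add_left_mono)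
        also have "\<dots> \<le> norm (f2 0) + L2 * (2 * Bd)" using nz L2(1) by (intro add_left_mono mult_left_mono) auto
        finally show ?thesis .
      qed
      have "\<bar>- (f1 z \<bullet> h) - (f2 z \<bullet> k)\<bar> \<le> \<bar>f1 z \<bullet> h\<bar> + \<bar>f2 z \<bullet> k\<bar>" by simp
      also have "\<dots> \<le> norm (f1 z) * norm h + norm (f2 z) * norm k"
        by (intro add_mono Cauchy_Schwarz_ineq2)
      also have "\<dots> \<le> norm (f1 z) * norm hk + norm (f2 z) * norm hk"
        unfolding hk by (intro add_mono mult_left_mono norm_fst_le norm_snd_le) auto
      also have "\<dots> = (norm (f1 z) + norm (f2 z)) * norm hk" by (simp add: algebra_simps)
      also have "\<dots> \<le> MU * norm hk" unfolding MU_def using b1 b2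
        by (intro mult_right_mono) (auto simp: algebra_simps)
      finally show "norm ((\<lambda>(h, k). - (f1 z \<bullet> h) - (f2 z \<bullet> k)) hk) \<le> MU * norm hk"
        unfolding hk by simp
    qed
  qed (use assms in auto)
  also have "\<dots> \<le> MU * (norm (x - x') + norm (y - y'))"
  proof (rule mult_left_mono)
    show "norm ((x, y) - (x', y')) \<le> norm (x - x') + norm (y - y')" using norm_Pair_le by simp
    show "0 \<le> MU" unfolding MU_def using L1(1) L2(1) Bd_nonneg by simp
  qed
  finally show ?thesis by simp
qed

lemma y0_bd: "norm y0 \<le> Bd" using Bd(2)[of 1 0] yd(3)[of 1] by simp

definition "Qb T = 2 * sqrt K2 * Wt T + 2 * MU * (Wt T + R)"

lemma fast_energy:
  assumes w: "\<omega> \<ge> \<omega>0" and s: "0 \<le> s" "s \<le> T"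
  shows "yd \<omega> s \<bullet> yd \<omega> s + \<omega>\<^sup>2 * (g (yw \<omega> s) \<bullet> g (yw \<omega> s)) \<le> Qb T / \<omega>"
proof -
  have wp: "\<omega> > 0" using w \<omega>0_pos by simp
  have e1: "yd \<omega> s \<bullet> yd \<omega> s + \<omega>\<^sup>2 * (g (yw \<omega> s) \<bullet> g (yw \<omega> s))
      = (xds s \<bullet> xds s - xd \<omega> s \<bullet> xd \<omega> s) + 2 * (U (xs s, y0) - U (xw \<omega> s, yw \<omega> s))"
    using energy[OF wp s(1)] limit_energy[OF s(1)] by simp
  have WW: "Wt s / \<omega> \<le> Wt T / \<omega>" using Wt_mono[OF s] wp by (intro divide_right_mono) auto
  have dx: "norm (xw \<omega> s - xs s) \<le> Wt T / \<omega>" using xs_close(1)[OF s(1) w] WW by simp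
  have dv: "norm (xd \<omega> s - xds s) \<le> Wt T / \<omega>" using xs_close(2)[OF s(1) w] WW by simp
  have dy: "norm (yw \<omega> s - y0) \<le> R / \<omega>" using y_close[OF w s(1)] .
  have "xds s \<bullet> xds s - xd \<omega> s \<bullet> xd \<omega> s = (xds s + xd \<omega> s) \<bullet> (xds s - xd \<omega> s)"
  proof -
    have "(xds s + xd \<omega> s) \<bullet> (xds s - xd \<omega> s) = xds s \<bullet> xds s - xds s \<bullet> xd \<omega> s + (xd \<omega> s \<bullet> xds s - xd \<omega> s \<bullet> xd \<omega> s)"
      by (simp only: inner_add_left inner_diff_right)
    moreover have "xd \<omega> s \<bullet> xds s = xds s \<bullet> xd \<omega> s" by (rule inner_commute)
    ultimately show ?thesis by linarith
  qed
  also have "\<dots> \<le> norm (xds s + xd \<omega> s) * norm (xds s - xd \<omega> s)"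
    by (rule order_trans[OF abs_ge_self Cauchy_Schwarz_ineq2])
  also have "\<dots> \<le> (2 * sqrt K2) * (Wt T / \<omega>)"
  proof (rule mult_mono)
    show "norm (xds s + xd \<omega> s) \<le> 2 * sqrt K2"
      using norm_triangle_ineq[of "xds s" "xd \<omega> s"] xs_bd(2)[OF s(1)] xd_bound[OF wp s(1)] by simp
    show "norm (xds s - xd \<omega> s) \<le> Wt T / \<omega>" using dv by (simp add: norm_minus_commute)
  qed (use K2_nonneg in auto)
  finally have a: "xds s \<bullet> xds s - xd \<omega> s \<bullet> xd \<omega> s \<le> 2 * sqrt K2 * (Wt T / \<omega>)" .
  have "U (xs s, y0) - U (xw \<omega> s, yw \<omega> s) \<le> \<bar>U (xs s, y0) - U (xw \<omega> s, yw \<omega> s)\<bar>" by simp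
  also have "\<dots> \<le> MU * (norm (xs s - xw \<omega> s) + norm (y0 - yw \<omega> s))"
    by (rule U_lip) (use xs_bd(1)[OF s(1)] y0_bd Bd[OF wp s(1)] in auto)
  also have "\<dots> \<le> MU * (Wt T / \<omega> + R / \<omega>)"
    using dx dy MU_nonneg by (intro mult_left_mono add_mono) (auto simp: norm_minus_commute)
  finally have b: "U (xs s, y0) - U (xw \<omega> s, yw \<omega> s) \<le> MU * (Wt T / \<omega> + R / \<omega>)" .
  have "Qb T / \<omega> = 2 * sqrt K2 * (Wt T / \<omega>) + 2 * (MU * (Wt T / \<omega> + R / \<omega>))"
    unfolding Qb_def using wp by (simp add: field_simps)
  moreover have "yd \<omega> s \<bullet> yd \<omega> s + \<omega>\<^sup>2 * (g (yw \<omega> s) \<bullet> g (yw \<omega> s)) \<le> 2 * sqrt K2 * (Wt T / \<omega>) + 2 * (MU * (Wt T / \<omega> + R / \<omega>))"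
    unfolding e1 by (rule add_mono[OF a]) (use b in simp)
  ultimately show ?thesis by simp
qed

end



lemma tendsto_c_div: "((\<lambda>w::real. c / w) \<longlongrightarrow> 0) at_top"
  by (rule tendsto_divide_0[OF tendsto_const filterlim_at_top_imp_at_infinity[OF filterlim_ident]])

context setting begin

lemma g_cont: "continuous_on S g"
proof -
  have "isCont g z" for z using has_derivative_continuous[OF g_deriv[of z]] by simp
  then show ?thesis by (simp add: continuous_at_imp_continuous_on)
qed

lemma f2_cont: "continuous_on S f2"
proof -
  obtain F' where "\<And>z. (f2 has_derivative blinfun_apply (F' z)) (at z)"
    using f2_C1 unfolding C1_bdd_deriv_def by blast
  then have "isCont f2 z" for z using has_derivative_continuous by blast
  then show ?thesis by (simp add: continuous_at_imp_continuous_on)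
qed

lemma vAi_bl: "bounded_linear (\<lambda>u. u v* Ai)"
proof -
  have "(\<lambda>u. u v* Ai) = (*v) (transpose Ai)" by (simp add: fun_eq_iff)
  then show ?thesis by simp
qed

lemma xs_cont: "continuous_on {0..} xs"
  by (rule cont_from_deriv, rule xs_deriv(2))

definition "Fs s = f2 (xs s, y0) v* Ai"

lemma Fs_cont: "continuous_on {0..} Fs"
proof -
  have "continuous_on {0..} (\<lambda>s. f2 (xs s, y0))"
    by (rule continuous_on_compose2[OF f2_cont[of UNIV]]) (auto intro!: continuous_intros xs_cont)
  then show ?thesis unfolding Fs_def
    by (rule continuous_on_compose2[OF linear_continuous_on[OF vAi_bl]]) auto
qed

lemma Fs_outer:
  assumes t: "t \<ge> 0"
  shows "((\<lambda>T. (1/T) *\<^sub>R integral {t..t+T} Fs) \<longlongrightarrow> Fs t) (at_right 0)"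
proof (rule tendstoI)
  fix e :: real assume e: "e > 0"
  obtain d where d: "d > 0" "\<And>s. s \<in> {0..} \<Longrightarrow> dist s t < d \<Longrightarrow> dist (Fs s) (Fs t) < e/2"
    using Fs_cont t e unfolding continuous_on_iff by (metis atLeast_iff half_gt_zero)
  show "\<forall>\<^sub>F T in at_right 0. dist ((1/T) *\<^sub>R integral {t..t+T} Fs) (Fs t) < e"
    unfolding eventually_at_right_field
  proof (intro exI[of _ d] conjI allI impI)
    show "0 < d" by (rule d(1))
    fix T :: real assume T: "0 < T" "T < d"
    have int: "Fs integrable_on {t..t+T}"
      by (rule integrable_continuous_interval, rule continuous_on_subset[OF Fs_cont]) (use t in auto)
    have i1: "integral {t..t+T} (\<lambda>s. Fs s - Fs t) = integral {t..t+T} Fs - T *\<^sub>R Fs t"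
      by (subst integral_diff[OF int integrable_const_ivl]) (use T in simp)
    have eq: "(1/T) *\<^sub>R integral {t..t+T} Fs - Fs t = (1/T) *\<^sub>R integral {t..t+T} (\<lambda>s. Fs s - Fs t)"
      unfolding i1 using T by (simp add: scaleR_diff_right)
    have "norm (integral {t..t+T} (\<lambda>s. Fs s - Fs t)) \<le> (e/2) * ((t + T) - t)"
    proof (rule integral_norm_le_const)
      fix s assume s: "s \<in> {t..t+T}"
      have "dist (Fs s) (Fs t) < e/2" using s t T by (intro d(2)) (auto simp: dist_real_def)
      then show "norm (Fs s - Fs t) \<le> e/2" by (simp add: dist_norm)
    qed (use T in simp)
    then have "norm ((1/T) *\<^sub>R integral {t..t+T} (\<lambda>s. Fs s - Fs t)) \<le> (1/T) * ((e/2) * T)"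
      using T by (simp add: divide_le_eq mult.commute)
    also have "\<dots> < e" using T e by simp
    finally show "dist ((1/T) *\<^sub>R integral {t..t+T} Fs) (Fs t) < e"
      unfolding dist_norm eq .
  qed
qed

end



context setting begin

definition "Hb b = (L2 * (Wt b + R) + Qb b * (2 * LD / cA)) * norm Ai"

lemma h_identity:
  fixes w :: real and G P Q :: "real^'m" and D :: "real^'m^'m"
  shows "w *\<^sub>R G - Q v* Ai + (P - w *\<^sub>R (G v* D)) v* Ai
       = (P - Q) v* Ai + (w *\<^sub>R (G v* (A - D))) v* Ai"
proof -
  have "w *\<^sub>R G = (w *\<^sub>R (G v* A)) v* Ai" by (simp add: scaleR_vector_matrix_assoc vA_Ai)
  then show ?thesis
    by (simp add: vector_matrix_mult_diff_distrib vector_matrix_left_distrib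
        vector_matrix_mult_diff_rdistrib scaleR_vector_matrix_assoc scaleR_diff_right algebra_simps)
qed

lemma h_bound:
  assumes w: "\<omega> \<ge> \<omega>0" and s: "0 \<le> s" "s \<le> b"
  shows "norm (\<omega>\<^sup>2 *\<^sub>R g (yw \<omega> s) - Fs s + ydd \<omega> s v* Ai) \<le> Hb b / \<omega>"
proof -
  have wp: "\<omega> > 0" using w \<omega>0_pos by simp
  define G where "G = g (yw \<omega> s)"
  define D where "D = Dg (yw \<omega> s)"
  define P where "P = f2 (xw \<omega> s, yw \<omega> s)"
  define Q where "Q = f2 (xs s, y0)"
  have eq: "\<omega>\<^sup>2 *\<^sub>R g (yw \<omega> s) - Fs s + ydd \<omega> s v* Ai
      = (P - Q) v* Ai + (\<omega>\<^sup>2 *\<^sub>R (G v* (A - D))) v* Ai"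
    unfolding Fs_def ydd_def G_def D_def P_def Q_def by (rule h_identity)
  have dy: "norm (yw \<omega> s - y0) \<le> R / \<omega>" by (rule y_close[OF w s(1)])
  have WW: "Wt s / \<omega> \<le> Wt b / \<omega>" using Wt_mono[OF s] wp by (intro divide_right_mono) auto
  have dx: "norm (xw \<omega> s - xs s) \<le> Wt b / \<omega>" using xs_close(1)[OF s(1) w] WW by simp
  have "norm ((P - Q) v* Ai) \<le> norm (P - Q) * norm Ai" by (rule vec_mat_norm)
  also have "\<dots> \<le> (L2 * (Wt b / \<omega> + R / \<omega>)) * norm Ai"
  proof (rule mult_right_mono)
    have "norm (P - Q) \<le> L2 * (norm (xw \<omega> s - xs s) + norm (yw \<omega> s - y0))"
      unfolding P_def Q_def by (rule pair_lip2)
    also have "\<dots> \<le> L2 * (Wt b / \<omega> + R / \<omega>)"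
      using dx dy L2(1) by (intro mult_left_mono add_mono) auto
    finally show "norm (P - Q) \<le> L2 * (Wt b / \<omega> + R / \<omega>)" .
  qed simp
  finally have n1: "norm ((P - Q) v* Ai) \<le> L2 * (Wt b + R) * norm Ai / \<omega>"
    using wp by (simp add: field_simps)
  have close: "norm (yw \<omega> s - y0) \<le> r0" using dy R_small[OF w] by simp
  have gl: "norm (yw \<omega> s - y0) \<le> (2 / cA) * norm G"
  proof -
    have "(cA / 2) * norm (yw \<omega> s - y0) \<le> norm G" unfolding G_def by (rule g_lower[OF close])
    then show ?thesis using cA_pos by (simp add: field_simps)
  qed
  have AD: "norm (A - D) \<le> LD * ((2 / cA) * norm G)"
  proof -
    have "norm (A - D) \<le> LD * norm (y0 - yw \<omega> s)" unfolding A_def D_def by (rule LD(2))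
    also have "\<dots> \<le> LD * ((2 / cA) * norm G)"
      using gl LD(1) by (intro mult_left_mono) (auto simp: norm_minus_commute)
    finally show ?thesis .
  qed
  have GG: "\<omega>\<^sup>2 * (norm G)^2 \<le> Qb b / \<omega>"
  proof -
    have "yd \<omega> s \<bullet> yd \<omega> s + \<omega>\<^sup>2 * (G \<bullet> G) \<le> Qb b / \<omega>"
      unfolding G_def by (rule fast_energy[OF w s])
    moreover have "0 \<le> yd \<omega> s \<bullet> yd \<omega> s" by simp
    ultimately have "\<omega>\<^sup>2 * (G \<bullet> G) \<le> Qb b / \<omega>" by linarith
    then show ?thesis by (simp add: power2_norm_eq_inner)
  qed
  have "norm ((\<omega>\<^sup>2 *\<^sub>R (G v* (A - D))) v* Ai) \<le> norm (\<omega>\<^sup>2 *\<^sub>R (G v* (A - D))) * norm Ai"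
    by (rule vec_mat_norm)
  also have "\<dots> = \<omega>\<^sup>2 * norm (G v* (A - D)) * norm Ai" by simp
  also have "\<dots> \<le> \<omega>\<^sup>2 * (norm G * (LD * ((2 / cA) * norm G))) * norm Ai"
  proof (intro mult_right_mono mult_left_mono)
    show "norm (G v* (A - D)) \<le> norm G * (LD * (2 / cA * norm G))"
      using vec_mat_norm[of G "A - D"] AD by (meson mult_left_mono norm_ge_zero order_trans)
  qed auto
  also have "\<dots> = (\<omega>\<^sup>2 * (norm G)^2) * (2 * LD / cA) * norm Ai"
    by (simp add: power2_eq_square)
  also have "\<dots> \<le> (Qb b / \<omega>) * (2 * LD / cA) * norm Ai"
    using GG LD(1) cA_pos by (intro mult_right_mono) auto
  finally have n2: "norm ((\<omega>\<^sup>2 *\<^sub>R (G v* (A - D))) v* Ai) \<le> (Qb b / \<omega>) * (2 * LD / cA) * norm Ai" .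
  have "norm (\<omega>\<^sup>2 *\<^sub>R g (yw \<omega> s) - Fs s + ydd \<omega> s v* Ai)
      \<le> norm ((P - Q) v* Ai) + norm ((\<omega>\<^sup>2 *\<^sub>R (G v* (A - D))) v* Ai)"
    unfolding eq by (rule norm_triangle_ineq)
  also have "\<dots> \<le> L2 * (Wt b + R) * norm Ai / \<omega> + (Qb b / \<omega>) * (2 * LD / cA) * norm Ai"
    using n1 n2 by (rule add_mono)
  also have "\<dots> = Hb b / \<omega>" unfolding Hb_def using wp by (simp add: field_simps)
  finally show ?thesis .
qed

end



context setting begin

lemma Qb_nonneg: "b \<ge> 0 \<Longrightarrow> Qb b \<ge> 0"
  unfolding Qb_def using K2_nonneg Wt_nonneg[of b] MU_nonneg R_nonneg by simp

lemma yd_small: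
  assumes w: "\<omega> \<ge> \<omega>0" and s: "0 \<le> s" "s \<le> b"
  shows "norm (yd \<omega> s) \<le> sqrt (Qb b / \<omega>)"
proof -
  have "yd \<omega> s \<bullet> yd \<omega> s + \<omega>\<^sup>2 * (g (yw \<omega> s) \<bullet> g (yw \<omega> s)) \<le> Qb b / \<omega>" by (rule fast_energy[OF w s])
  moreover have "0 \<le> \<omega>\<^sup>2 * (g (yw \<omega> s) \<bullet> g (yw \<omega> s))" by simp
  ultimately have "yd \<omega> s \<bullet> yd \<omega> s \<le> Qb b / \<omega>" by linarith
  then show ?thesis by (simp add: norm_eq_sqrt_inner)
qed

lemma inner_bound:
  assumes t: "t \<ge> 0" and T: "T > 0" and w: "\<omega> \<ge> \<omega>0"
  shows "norm ((1/T) *\<^sub>R integral {t..t+T} (\<lambda>s. \<omega>\<^sup>2 *\<^sub>R g (yw \<omega> s)) - (1/T) *\<^sub>R integral {t..t+T} Fs)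
     \<le> Hb (t+T) / \<omega> + (2 * norm Ai / T) * sqrt (Qb (t+T) / \<omega>)"
proof -
  have wp: "\<omega> > 0" using w \<omega>0_pos by simp
  define a where "a = t"
  define b where "b = t + T"
  have ab: "a \<le> b" "0 \<le> a" unfolding a_def b_def using t T by auto
  have sub: "{a..b} \<subseteq> {0..}" using ab by auto
  have int1: "(\<lambda>s. \<omega>\<^sup>2 *\<^sub>R g (yw \<omega> s)) integrable_on {a..b}"
  proof (rule integrable_continuous_interval)
    have "continuous_on {a..b} (\<lambda>s. g (yw \<omega> s))"
      by (rule continuous_on_compose2[OF g_cont[of UNIV] continuous_on_subset[OF yw_cont[OF wp] sub]]) auto
    then show "continuous_on {a..b} (\<lambda>s. \<omega>\<^sup>2 *\<^sub>R g (yw \<omega> s))" by (intro continuous_intros)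
  qed
  have int2: "Fs integrable_on {a..b}"
    by (rule integrable_continuous_interval, rule continuous_on_subset[OF Fs_cont sub])
  have ftc: "(ydd \<omega> has_integral (yd \<omega> b - yd \<omega> a)) {a..b}"
  proof (rule fundamental_theorem_of_calculus[OF ab(1)])
    fix x assume x: "x \<in> {a..b}"
    then have "x \<ge> 0" using ab by simp
    then show "(yd \<omega> has_vector_derivative ydd \<omega> x) (at x within {a..b})"
      using has_vector_derivative_within_subset[OF yd(2)[OF wp] sub] by blast
  qed
  have lin: "((\<lambda>s. ydd \<omega> s v* Ai) has_integral ((yd \<omega> b - yd \<omega> a) v* Ai)) {a..b}"
    using has_integral_linear[OF ftc vAi_bl] by (simp add: o_def)
  define h where "h s = \<omega>\<^sup>2 *\<^sub>R g (yw \<omega> s) - Fs s + ydd \<omega> s v* Ai" for s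
  define I1 where "I1 = integral {a..b} (\<lambda>s. \<omega>\<^sup>2 *\<^sub>R g (yw \<omega> s))"
  define I2 where "I2 = integral {a..b} Fs"
  define \<Delta> where "\<Delta> = (yd \<omega> b - yd \<omega> a) v* Ai"
  have "(h has_integral (I1 - I2 + \<Delta>)) {a..b}"
    unfolding h_def I1_def I2_def \<Delta>_def
    by (intro has_integral_add has_integral_diff integrable_integral int1 int2 lin)
  then have ih: "integral {a..b} h = I1 - I2 + \<Delta>" by (rule integral_unique)
  have nh: "norm (integral {a..b} h) \<le> (Hb b / \<omega>) * (b - a)"
  proof (rule integral_norm_le_const[OF ab(1)])
    fix s assume "s \<in> {a..b}"
    then have "0 \<le> s" "s \<le> b" using ab by auto
    then show "norm (h s) \<le> Hb b / \<omega>" unfolding h_def by (rule h_bound[OF w])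
  qed
  have nd: "norm \<Delta> \<le> 2 * sqrt (Qb b / \<omega>) * norm Ai"
  proof -
    have "norm \<Delta> \<le> norm (yd \<omega> b - yd \<omega> a) * norm Ai" unfolding \<Delta>_def by (rule vec_mat_norm)
    also have "\<dots> \<le> (norm (yd \<omega> b) + norm (yd \<omega> a)) * norm Ai"
      by (intro mult_right_mono norm_triangle_ineq4) simp
    also have "\<dots> \<le> (sqrt (Qb b / \<omega>) + sqrt (Qb b / \<omega>)) * norm Ai"
      using yd_small[OF w, of b b] yd_small[OF w, of a b] ab by (intro mult_right_mono add_mono) auto
    finally show ?thesis by simp
  qed
  have "(1/T) *\<^sub>R I1 - (1/T) *\<^sub>R I2 = (1/T) *\<^sub>R (integral {a..b} h - \<Delta>)"
    unfolding ih by (simp add: scaleR_diff_right)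
  then have "norm ((1/T) *\<^sub>R I1 - (1/T) *\<^sub>R I2) = (1/T) * norm (integral {a..b} h - \<Delta>)"
    using T by simp
  also have "\<dots> \<le> (1/T) * ((Hb b / \<omega>) * T + 2 * sqrt (Qb b / \<omega>) * norm Ai)"
  proof (rule mult_left_mono)
    have "norm (integral {a..b} h - \<Delta>) \<le> norm (integral {a..b} h) + norm \<Delta>" by (rule norm_triangle_ineq4)
    also have "\<dots> \<le> (Hb b / \<omega>) * T + 2 * sqrt (Qb b / \<omega>) * norm Ai"
      using nh nd unfolding a_def b_def by simp
    finally show "norm (integral {a..b} h - \<Delta>) \<le> (Hb b / \<omega>) * T + 2 * sqrt (Qb b / \<omega>) * norm Ai" .
  qed (use T in simp)
  also have "\<dots> = Hb b / \<omega> + (2 * norm Ai / T) * sqrt (Qb b / \<omega>)"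
    using T by (simp add: field_simps)
  finally show ?thesis unfolding I1_def I2_def a_def b_def .
qed

lemma inner_limit:
  assumes t: "t \<ge> 0" and T: "T > 0"
  shows "((\<lambda>\<omega>. (1/T) *\<^sub>R integral {t..t+T} (\<lambda>s. \<omega>\<^sup>2 *\<^sub>R g (yw \<omega> s))) \<longlongrightarrow> (1/T) *\<^sub>R integral {t..t+T} Fs) at_top"
proof -
  have z: "((\<lambda>\<omega>. Hb (t+T) / \<omega> + (2 * norm Ai / T) * sqrt (Qb (t+T) / \<omega>)) \<longlongrightarrow> 0 + (2 * norm Ai / T) * sqrt 0) at_top"
    by (intro tendsto_intros tendsto_c_div)
  have "((\<lambda>\<omega>. (1/T) *\<^sub>R integral {t..t+T} (\<lambda>s. \<omega>\<^sup>2 *\<^sub>R g (yw \<omega> s)) - (1/T) *\<^sub>R integral {t..t+T} Fs) \<longlongrightarrow> 0) at_top"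
  proof (rule Lim_null_comparison)
    show "\<forall>\<^sub>F \<omega> in at_top. norm ((1/T) *\<^sub>R integral {t..t+T} (\<lambda>s. \<omega>\<^sup>2 *\<^sub>R g (yw \<omega> s)) - (1/T) *\<^sub>R integral {t..t+T} Fs)
        \<le> Hb (t+T) / \<omega> + (2 * norm Ai / T) * sqrt (Qb (t+T) / \<omega>)"
      using eventually_ge_at_top[of \<omega>0] by (rule eventually_mono) (rule inner_bound[OF t T])
    show "((\<lambda>\<omega>. Hb (t+T) / \<omega> + (2 * norm Ai / T) * sqrt (Qb (t+T) / \<omega>)) \<longlongrightarrow> 0) at_top"
      using z by simp
  qed
  then show ?thesis by (rule LIM_zero_cancel)
qed

definition "lam t = - Fs t"

lemma iter_lim_lam:
  assumes t: "t \<ge> 0"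
  shows "iter_lim (\<lambda>\<omega> T. (1 / T) *\<^sub>R integral {t..t+T} (\<lambda>s. \<omega>\<^sup>2 *\<^sub>R g (yw \<omega> s))) (- lam t)"
  unfolding iter_lim_def lam_def minus_minus
proof (intro exI conjI)
  show "\<forall>\<^sub>F T in at_right 0. ((\<lambda>\<omega>. (1/T) *\<^sub>R integral {t..t+T} (\<lambda>s. \<omega>\<^sup>2 *\<^sub>R g (yw \<omega> s)))
      \<longlongrightarrow> (1/T) *\<^sub>R integral {t..t+T} Fs) at_top"
    using eventually_at_right_less[of "0::real"] by (rule eventually_mono) (rule inner_limit[OF t])
  show "((\<lambda>T. (1/T) *\<^sub>R integral {t..t+T} Fs) \<longlongrightarrow> Fs t) (at_right 0)" by (rule Fs_outer[OF t])
qed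

end



lemma arith2:
  fixes a b c d p q r u e1 e2 L1 L2 M :: real
  assumes nn: "a \<ge> 0" "b \<ge> 0" "c \<ge> 0" "d \<ge> 0" "L1 \<ge> 0" "L2 \<ge> 0" "M \<ge> 0"
    and h: "p \<le> a * b" "q \<le> b * e1" "e1 \<le> L1 * (a + c)" "r \<le> c * d" "u \<le> d * e2"
      "e2 \<le> L2 * (a + c) + M * c"
  shows "2 * p + 2 * q + 2 * r + 2 * u \<le> (2 + 2 * L1 + 2 * L2 + M) * (a^2 + b^2 + c^2 + d^2)"
proof -
  have sq: "2 * x * y \<le> x^2 + y^2" for x y :: real using sum_squares_bound[of x y] by (simp add: power2_eq_square)
  have q: "2 * q \<le> 2 * (L1 * (a * b)) + 2 * (L1 * (b * c))"
  proof -
    have "q \<le> b * (L1 * (a + c))" using h(2,3) nn(2) by (meson mult_left_mono order_trans)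
    moreover have "b * (L1 * (a + c)) = L1 * (a * b) + L1 * (b * c)" by (simp add: algebra_simps)
    ultimately show ?thesis by linarith
  qed
  have u: "2 * u \<le> 2 * (L2 * (d * a)) + 2 * (L2 * (d * c)) + 2 * (M * (d * c))"
  proof -
    have "u \<le> d * (L2 * (a + c) + M * c)" using h(5,6) nn(4) by (meson mult_left_mono order_trans)
    moreover have "d * (L2 * (a + c) + M * c) = L2 * (d * a) + L2 * (d * c) + M * (d * c)" by (simp add: algebra_simps)
    ultimately show ?thesis by linarith
  qed
  have i1: "2 * (L1 * (a * b)) \<le> L1 * a^2 + L1 * b^2"
    using mult_left_mono[OF sq[of a b] nn(5)] by (simp add: algebra_simps)
  have i2: "2 * (L1 * (b * c)) \<le> L1 * b^2 + L1 * c^2"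
    using mult_left_mono[OF sq[of b c] nn(5)] by (simp add: algebra_simps)
  have i3: "2 * (L2 * (d * a)) \<le> L2 * d^2 + L2 * a^2"
    using mult_left_mono[OF sq[of d a] nn(6)] by (simp add: algebra_simps)
  have i4: "2 * (L2 * (d * c)) \<le> L2 * d^2 + L2 * c^2"
    using mult_left_mono[OF sq[of d c] nn(6)] by (simp add: algebra_simps)
  have i4': "2 * (M * (d * c)) \<le> M * d^2 + M * c^2"
    using mult_left_mono[OF sq[of d c] nn(7)] by (simp add: algebra_simps)
  have i5: "2 * (a * b) \<le> a^2 + b^2" "2 * (c * d) \<le> c^2 + d^2" using sq[of a b] sq[of c d] by (simp_all add: algebra_simps)
  have pos: "0 \<le> L1 * a^2" "0 \<le> L2 * b^2" "0 \<le> L2 * a^2" "0 \<le> L1 * d^2" "0 \<le> M * a^2" "0 \<le> M * b^2"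
    "0 \<le> L2 * c^2" "0 \<le> L1 * c^2" "0 \<le> a^2" "0 \<le> b^2" "0 \<le> c^2" "0 \<le> d^2" "0 \<le> L1 * b^2" "0 \<le> M * c^2"
    "0 \<le> M * d^2" "0 \<le> L2 * d^2"
    using nn by simp_all
  have ex: "(2 + 2 * L1 + 2 * L2 + M) * (a^2 + b^2 + c^2 + d^2) = 2 * a^2 + 2 * b^2 + 2 * c^2 + 2 * d^2
     + 2 * (L1 * a^2) + 2 * (L1 * b^2) + 2 * (L1 * c^2) + 2 * (L1 * d^2)
     + 2 * (L2 * a^2) + 2 * (L2 * b^2) + 2 * (L2 * c^2) + 2 * (L2 * d^2)
     + M * a^2 + M * b^2 + M * c^2 + M * d^2"
    by (simp add: algebra_simps)
  show ?thesis unfolding ex using h(1,4) q u i1 i2 i3 i4 i4' i5 pos by linarith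
qed

lemma neg_vm: "(- u) v* B = - (u v* (B::real^'n^'m))"
  by (simp add: vector_matrix_mult_def vec_eq_iff sum_negf)

context setting begin

lemma lam_A: "f2 (xs t, y0) + lam t v* A = 0"
  unfolding lam_def Fs_def by (simp add: neg_vm vA_Ai)

lemma lam_cont: "continuous_on {0..} lam"
  unfolding lam_def by (intro continuous_intros Fs_cont)

lemma exist_sol:
  "solves2 xs (\<lambda>t. f1 (xs t, (\<lambda>_. y0) t)) x0 x1"
  "solves2 (\<lambda>_. y0) (\<lambda>t. f2 (xs t, (\<lambda>_. y0) t) + lam t v* Dg ((\<lambda>_. y0) t)) y0 y1"
proof -
  show "solves2 xs (\<lambda>t. f1 (xs t, (\<lambda>_. y0) t)) x0 x1"
    unfolding solves2_def using xs_deriv xs0 by (intro exI[of _ xds]) auto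
  have "((\<lambda>_. 0) has_vector_derivative (f2 (xs t, y0) + lam t v* Dg y0)) (at t within {0..})" for t
    using lam_A[of t] unfolding A_def by (simp add: has_vector_derivative_const)
  then show "solves2 (\<lambda>_. y0) (\<lambda>t. f2 (xs t, (\<lambda>_. y0) t) + lam t v* Dg ((\<lambda>_. y0) t)) y0 y1"
    unfolding solves2_def using y1_0
    by (intro exI[of _ "\<lambda>_. 0"]) (auto intro: has_vector_derivative_const)
qed

lemma uniqueness:
  assumes sx: "solves2 x (\<lambda>t. f1 (x t, y t)) x0 x1"
    and sy: "solves2 y (\<lambda>t. f2 (x t, y t) + lam t v* Dg (y t)) y0 y1"
    and T: "T \<ge> 0"
  shows "x T = xs T \<and> y T = y0"
proof -
  obtain x' where x': "\<And>t. t \<ge> 0 \<Longrightarrow> (x has_vector_derivative x' t) (at t within {0..})"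
    "\<And>t. t \<ge> 0 \<Longrightarrow> (x' has_vector_derivative f1 (x t, y t)) (at t within {0..})" "x 0 = x0" "x' 0 = x1"
    using sx unfolding solves2_def by blast
  obtain y' where y': "\<And>t. t \<ge> 0 \<Longrightarrow> (y has_vector_derivative y' t) (at t within {0..})"
    "\<And>t. t \<ge> 0 \<Longrightarrow> (y' has_vector_derivative (f2 (x t, y t) + lam t v* Dg (y t))) (at t within {0..})"
    "y 0 = y0" "y' 0 = y1"
    using sy unfolding solves2_def by blast
  have "bounded (lam ` {0..T})"
    by (rule compact_imp_bounded, rule compact_continuous_image)
      (auto intro: continuous_on_subset[OF lam_cont])
  then obtain \<Lambda>0 where \<Lambda>0: "\<And>s. s \<in> {0..T} \<Longrightarrow> norm (lam s) \<le> \<Lambda>0"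
    unfolding bounded_iff by blast
  define \<Lambda> where "\<Lambda> = \<bar>\<Lambda>0\<bar>"
  have \<Lambda>: "\<And>s. s \<in> {0..T} \<Longrightarrow> norm (lam s) \<le> \<Lambda>" "\<Lambda> \<ge> 0"
  proof -
    show "\<Lambda> \<ge> 0" unfolding \<Lambda>_def by simp
    fix s assume "s \<in> {0..T}"
    then have "norm (lam s) \<le> \<Lambda>0" by (rule \<Lambda>0)
    moreover have "\<Lambda>0 \<le> \<bar>\<Lambda>0\<bar>" by simp
    ultimately show "norm (lam s) \<le> \<Lambda>" unfolding \<Lambda>_def by linarith
  qed
  define dx where "dx s = x s - xs s" for s
  define dv where "dv s = x' s - xds s" for s
  define dy where "dy s = y s - y0" for s
  define e1 where "e1 s = f1 (x s, y s) - f1 (xs s, y0)" for s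
  define e2 where "e2 s = f2 (x s, y s) + lam s v* Dg (y s)" for s
  define \<phi> where "\<phi> s = dx s \<bullet> dx s + dv s \<bullet> dv s + dy s \<bullet> dy s + y' s \<bullet> y' s" for s
  define K where "K = 2 + 2 * L1 + 2 * L2 + \<Lambda> * LD"
  have d: "(\<phi> has_real_derivative (2 * (dx s \<bullet> dv s) + 2 * (dv s \<bullet> e1 s) + 2 * (dy s \<bullet> y' s) + 2 * (y' s \<bullet> e2 s)))
      (at s within {0..T})" if s: "s \<in> {0..T}" for s
  proof -
    have s0: "s \<ge> 0" using s by simp
    have a1: "(dx has_vector_derivative dv s) (at s within {0..})"
      unfolding dx_def dv_def by (intro has_vector_derivative_diff x'(1)[OF s0] xs_deriv(2)[OF s0])
    have a2: "(dv has_vector_derivative e1 s) (at s within {0..})"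
      unfolding dv_def e1_def by (intro has_vector_derivative_diff x'(2)[OF s0] xs_deriv(1)[OF s0])
    have a3: "(dy has_vector_derivative y' s) (at s within {0..})"
      unfolding dy_def using has_vector_derivative_diff[OF y'(1)[OF s0] has_vector_derivative_const[of y0]] by simp
    have a4: "(y' has_vector_derivative e2 s) (at s within {0..})"
      unfolding e2_def by (rule y'(2)[OF s0])
    have "(\<phi> has_real_derivative (2 * (dx s \<bullet> dv s) + 2 * (dv s \<bullet> e1 s) + 2 * (dy s \<bullet> y' s) + 2 * (y' s \<bullet> e2 s)))
      (at s within {0..})"
      unfolding \<phi>_def by (rule DERIV_add[OF DERIV_add[OF DERIV_add[OF inner_self_deriv[OF a1] inner_self_deriv[OF a2]]
          inner_self_deriv[OF a3]] inner_self_deriv[OF a4]])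
    then show ?thesis by (rule DERIV_subset) auto
  qed
  have b: "2 * (dx s \<bullet> dv s) + 2 * (dv s \<bullet> e1 s) + 2 * (dy s \<bullet> y' s) + 2 * (y' s \<bullet> e2 s) \<le> K * \<phi> s + 0"
    if s: "s \<in> {0..T}" for s
  proof -
    have ip: "v \<bullet> w \<le> norm v * norm w" for v w :: "real^'k"
      by (rule order_trans[OF abs_ge_self Cauchy_Schwarz_ineq2])
    have ne1: "norm (e1 s) \<le> L1 * (norm (dx s) + norm (dy s))"
      unfolding e1_def dx_def dy_def by (rule pair_lip1)
    have e2eq: "e2 s = (f2 (x s, y s) - f2 (xs s, y0)) + lam s v* (Dg (y s) - A)"
      unfolding e2_def using lam_A[of s] by (simp add: vector_matrix_mult_diff_rdistrib algebra_simps)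
    have ne2: "norm (e2 s) \<le> L2 * (norm (dx s) + norm (dy s)) + (\<Lambda> * LD) * norm (dy s)"
    proof -
      have "norm (e2 s) \<le> norm (f2 (x s, y s) - f2 (xs s, y0)) + norm (lam s v* (Dg (y s) - A))"
        unfolding e2eq by (rule norm_triangle_ineq)
      also have "\<dots> \<le> L2 * (norm (dx s) + norm (dy s)) + (\<Lambda> * LD) * norm (dy s)"
      proof (rule add_mono)
        show "norm (f2 (x s, y s) - f2 (xs s, y0)) \<le> L2 * (norm (dx s) + norm (dy s))"
          unfolding dx_def dy_def by (rule pair_lip2)
        have "norm (lam s v* (Dg (y s) - A)) \<le> norm (lam s) * norm (Dg (y s) - A)" by (rule vec_mat_norm)
        also have "\<dots> \<le> \<Lambda> * (LD * norm (dy s))"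
          unfolding A_def dy_def using \<Lambda>(1)[OF s] \<Lambda>(2) LD(2)[of "y s" y0] by (intro mult_mono) auto
        finally show "norm (lam s v* (Dg (y s) - A)) \<le> (\<Lambda> * LD) * norm (dy s)" by (simp add: mult.assoc)
      qed
      finally show ?thesis .
    qed
    have "2 * (dx s \<bullet> dv s) + 2 * (dv s \<bullet> e1 s) + 2 * (dy s \<bullet> y' s) + 2 * (y' s \<bullet> e2 s)
        \<le> (2 + 2 * L1 + 2 * L2 + \<Lambda> * LD) * ((norm (dx s))^2 + (norm (dv s))^2 + (norm (dy s))^2 + (norm (y' s))^2)"
      by (rule arith2[OF _ _ _ _ _ _ _ ip ip ne1 ip ip ne2]) (use L1(1) L2(1) LD(1) \<Lambda>(2) in auto)
    moreover have "\<phi> s = (norm (dx s))^2 + (norm (dv s))^2 + (norm (dy s))^2 + (norm (y' s))^2"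
      unfolding \<phi>_def by (simp add: power2_norm_eq_inner)
    ultimately show ?thesis unfolding K_def by simp
  qed
  have "\<phi> T \<le> (\<phi> 0 + 0 * T) * exp (K * T)"
    by (rule gronwall[OF T d b]) (use L1(1) L2(1) LD(1) \<Lambda>(2) in \<open>auto simp: K_def\<close>)
  moreover have "\<phi> 0 = 0"
    unfolding \<phi>_def dx_def dv_def dy_def using x'(3,4) y'(3,4) xs0 y1_0 by simp
  ultimately have "\<phi> T \<le> 0" by simp
  moreover have "\<phi> T = (norm (dx T))^2 + (norm (dv T))^2 + (norm (dy T))^2 + (norm (y' T))^2"
    unfolding \<phi>_def by (simp add: power2_norm_eq_inner)
  ultimately have "(norm (dx T))^2 + (norm (dv T))^2 + (norm (dy T))^2 + (norm (y' T))^2 \<le> 0" by simp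
  moreover have "0 \<le> (norm (dx T))^2" "0 \<le> (norm (dv T))^2" "0 \<le> (norm (dy T))^2" "0 \<le> (norm (y' T))^2"
    by simp_all
  ultimately have "(norm (dx T))^2 \<le> 0" "(norm (dy T))^2 \<le> 0" by linarith+
  then have "dx T = 0" "dy T = 0" by simp_all
  then show ?thesis unfolding dx_def dy_def by simp
qed

end



context setting begin

lemma conclusions:
  assumes sx: "solves2 x (\<lambda>t. f1 (x t, y t)) x0 x1"
    and sy: "solves2 y (\<lambda>t. f2 (x t, y t) + lam t v* Dg (y t)) y0 y1"
  shows "(\<forall>t\<ge>0. ((\<lambda>\<omega>. xw \<omega> t) \<longlongrightarrow> x t) at_top)
        \<and> two_scale_flow_conv yw y
        \<and> (\<forall>t\<ge>0. ((\<lambda>\<omega>. g (yw \<omega> t)) \<longlongrightarrow> 0) at_top)"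
proof (intro conjI allI impI)
  note U = uniqueness[OF sx sy]
  fix t :: real assume t: "t \<ge> 0"
  have "((\<lambda>\<omega>. xw \<omega> t - xs t) \<longlongrightarrow> 0) at_top"
  proof (rule Lim_null_comparison)
    show "\<forall>\<^sub>F \<omega> in at_top. norm (xw \<omega> t - xs t) \<le> Wt t / \<omega>"
      using eventually_ge_at_top[of \<omega>0] by (rule eventually_mono) (rule xs_close(1)[OF t])
  qed (rule tendsto_c_div)
  then show "((\<lambda>\<omega>. xw \<omega> t) \<longlongrightarrow> x t) at_top" using U[OF t] LIM_zero_cancel by simp
next
  fix t :: real assume t: "t \<ge> 0"
  show "((\<lambda>\<omega>. g (yw \<omega> t)) \<longlongrightarrow> 0) at_top"
  proof (rule Lim_null_comparison)
    show "\<forall>\<^sub>F \<omega> in at_top. norm (g (yw \<omega> t)) \<le> sqrt K2 / \<omega>"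
      using eventually_ge_at_top[of 1] by (rule eventually_mono) (rule g_bound[OF _ t], simp)
  qed (rule tendsto_c_div)
next
  note U = uniqueness[OF sx sy]
  show "two_scale_flow_conv yw y"
    unfolding two_scale_flow_conv_def
  proof (intro allI impI)
    fix t :: real and \<phi> :: "real^'m \<Rightarrow> real"
    assume t: "t \<ge> 0" and ph: "bounded (range \<phi>) \<and> (\<exists>C. C-lipschitz_on UNIV \<phi>)"
    then obtain C where C: "C-lipschitz_on UNIV \<phi>" by blast
    have C0: "C \<ge> 0" using lipschitz_on_nonneg[OF C] .
    show "iter_lim (\<lambda>\<omega> T. (1 / T) * integral {t..t+T} (\<lambda>s. \<phi> (yw \<omega> s) - \<phi> (y s))) 0"
      unfolding iter_lim_def
    proof (intro exI[of _ "\<lambda>T. 0"] conjI)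
      show "((\<lambda>T::real. 0::real) \<longlongrightarrow> 0) (at_right 0)" by simp
      show "\<forall>\<^sub>F T in at_right 0. ((\<lambda>\<omega>. (1 / T) * integral {t..t+T} (\<lambda>s. \<phi> (yw \<omega> s) - \<phi> (y s))) \<longlongrightarrow> 0) at_top"
        using eventually_at_right_less[of "0::real"]
      proof (rule eventually_mono)
        fix T :: real assume T: "0 < T"
        show "((\<lambda>\<omega>. (1 / T) * integral {t..t+T} (\<lambda>s. \<phi> (yw \<omega> s) - \<phi> (y s))) \<longlongrightarrow> 0) at_top"
        proof (rule Lim_null_comparison)
          show "((\<lambda>\<omega>. C * R / \<omega>) \<longlongrightarrow> 0) at_top" by (rule tendsto_c_div)
          show "\<forall>\<^sub>F \<omega> in at_top. norm ((1 / T) * integral {t..t+T} (\<lambda>s. \<phi> (yw \<omega> s) - \<phi> (y s))) \<le> C * R / \<omega>"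
            using eventually_ge_at_top[of \<omega>0]
          proof (rule eventually_mono)
            fix \<omega> assume w: "\<omega> \<ge> \<omega>0"
            have wp: "\<omega> > 0" using w \<omega>0_pos by simp
            have "norm (integral {t..t+T} (\<lambda>s. \<phi> (yw \<omega> s) - \<phi> (y s))) \<le> (C * R / \<omega>) * ((t + T) - t)"
            proof (rule integral_norm_le_const)
              fix s assume s: "s \<in> {t..t+T}"
              then have s0: "s \<ge> 0" using t by simp
              have "y s = y0" using U[OF s0] by simp
              then have "norm (\<phi> (yw \<omega> s) - \<phi> (y s)) = dist (\<phi> (yw \<omega> s)) (\<phi> y0)" by (simp add: dist_norm)
              also have "\<dots> \<le> C * dist (yw \<omega> s) y0" by (rule lipschitz_onD[OF C]) auto
              also have "\<dots> \<le> C * (R / \<omega>)"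
                using y_close[OF w s0] C0 by (intro mult_left_mono) (auto simp: dist_norm)
              finally show "norm (\<phi> (yw \<omega> s) - \<phi> (y s)) \<le> C * R / \<omega>" by simp
            qed (use T in simp)
            then have "(1/T) * norm (integral {t..t+T} (\<lambda>s. \<phi> (yw \<omega> s) - \<phi> (y s))) \<le> (1/T) * ((C * R / \<omega>) * T)"
              using T by (intro mult_left_mono) auto
            then show "norm ((1 / T) * integral {t..t+T} (\<lambda>s. \<phi> (yw \<omega> s) - \<phi> (y s))) \<le> C * R / \<omega>"
              using T by (simp add: abs_mult)
          qed
        qed
      qed
    qed
  qed
qed

end

theorem lemma3p2:
  fixes U :: "(real^('p::finite)) \<times> (real^('m::finite)) \<Rightarrow> real"
    and f1 :: "(real^'p) \<times> (real^'m) \<Rightarrow> real^'p"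
    and f2 :: "(real^'p) \<times> (real^'m) \<Rightarrow> real^'m"
    and g :: "real^'m \<Rightarrow> real^'m"
    and Dg :: "real^'m \<Rightarrow> real^'m^'m"
    and xw :: "real \<Rightarrow> real \<Rightarrow> real^'p"
    and yw :: "real \<Rightarrow> real \<Rightarrow> real^'m"
    and x0 x1 :: "real^'p" and y0 y1 :: "real^'m"
  assumes U_grad: "\<And>x y. (U has_derivative (\<lambda>(h, k). - (f1 (x, y) \<bullet> h) - (f2 (x, y) \<bullet> k))) (at (x, y))"
    and g_deriv: "\<And>y. (g has_derivative (\<lambda>h. Dg y *v h)) (at y)"
    and f1_C1: "C1_bdd_deriv f1"
    and f2_C1: "C1_bdd_deriv f2"
    and Dg_C1: "C1_bdd_deriv Dg"
    and sol: "\<And>\<omega>. \<omega> > 0 \<Longrightarrow>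
               solves2 (xw \<omega>) (\<lambda>t. f1 (xw \<omega> t, yw \<omega> t)) x0 x1 \<and>
               solves2 (yw \<omega>) (\<lambda>t. f2 (xw \<omega> t, yw \<omega> t) - \<omega>\<^sup>2 *\<^sub>R (g (yw \<omega> t) v* Dg (yw \<omega> t))) y0 y1"
    and g_y0: "g y0 = 0"
    and Dg_y1: "Dg y0 *v y1 = 0"
    and bdd: "\<exists>B. \<forall>\<omega>>0. \<forall>t\<ge>0. norm (xw \<omega> t) \<le> B \<and> norm (yw \<omega> t) \<le> B"
    and nonsing: "\<exists>\<epsilon>>0. \<forall>y\<in>ball y0 \<epsilon>. invertible (Dg y)"
  shows "\<exists>lam :: real \<Rightarrow> real^'m.
           (\<forall>t\<ge>0. iter_lim (\<lambda>\<omega> T. (1 / T) *\<^sub>R integral {t..t+T} (\<lambda>s. \<omega>\<^sup>2 *\<^sub>R g (yw \<omega> s))) (- lam t))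
         \<and> (\<exists>x y. solves2 x (\<lambda>t. f1 (x t, y t)) x0 x1 \<and>
                  solves2 y (\<lambda>t. f2 (x t, y t) + lam t v* Dg (y t)) y0 y1)
         \<and> (\<forall>x y. solves2 x (\<lambda>t. f1 (x t, y t)) x0 x1 \<and>
                  solves2 y (\<lambda>t. f2 (x t, y t) + lam t v* Dg (y t)) y0 y1 \<longrightarrow>
                  (\<forall>t\<ge>0. ((\<lambda>\<omega>. xw \<omega> t) \<longlongrightarrow> x t) at_top)
                \<and> two_scale_flow_conv yw y
                \<and> (\<forall>t\<ge>0. ((\<lambda>\<omega>. g (yw \<omega> t)) \<longlongrightarrow> 0) at_top))"
proof -
  interpret S: setting U f1 f2 g Dg xw yw x0 x1 y0 y1
    by (rule setting.intro) (fact U_grad g_deriv f1_C1 f2_C1 Dg_C1 g_y0 Dg_y1 bdd nonsing | rule sol, assumption)+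
  show ?thesis
  proof (intro exI[of _ S.lam] conjI allI impI)
    show "iter_lim (\<lambda>\<omega> T. (1 / T) *\<^sub>R integral {t..t+T} (\<lambda>s. \<omega>\<^sup>2 *\<^sub>R g (yw \<omega> s))) (- S.lam t)"
      if "t \<ge> 0" for t using S.iter_lim_lam[OF that] .
    show "\<exists>x y. solves2 x (\<lambda>t. f1 (x t, y t)) x0 x1 \<and>
                  solves2 y (\<lambda>t. f2 (x t, y t) + S.lam t v* Dg (y t)) y0 y1"
      by (intro exI[of _ S.xs] exI[of _ "\<lambda>_. y0"] conjI S.exist_sol)
  qed (use S.conclusions in blast)+
qed



end
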